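(* The algebra homomorphism $\psi_{n,r}:U_0(\mathfrak{gl}_n)\to\mathbf S_0(n,r)$ satisfies $\psi_{n,r}(\mathbf e_i)=e_i$ and $\psi_{n,r}(\mathbf f_i)=f_i$ for $1\le i\le n-1$, and $\psi_{n,r}(\mathbf k_i)=\sum_{\mu\in\Lambda(n,r),\ \mu_i=0}k_\mu$ for $1\le i\le n$.
   Context: The degenerate quantum group $U_0(\mathfrak{gl}_n)$ (Krob–Thibon) is the unital $\mathbb C$-algebra generated by $\mathbf e_i,\mathbf f_i$ ($1\le i\le n-1$) and $\mathbf k_i$ ($1\le i\le n$) subject to the relations: - $\mathbf k_i\mathbf k_j=\mathbf k_j\mathbf k_i$; - $\mathbf e_{i-1}\mathbf k_i=0$ and $\mathbf k_i\mathbf f_{i-1}=0$ ($2\le i\le n-1$); - $\mathbf k_i\mathbf e_i=0$ and $\mathbf f_i\mathbf k_i=0$; - $\mathbf k_i\mathbf e_j=\mathbf e_j\mathbf k_i$ and $\mathbf k_i\mathbf f_j=\mathbf f_j\mathbf k_i$ for $j\ne i-1,i$; - $[\mathbf e_i,\mathbf f_j]=\delta_{ij}(\mathbf k_{i+1}-\mathbf k_i)$; - $\mathbf e_i^2\mathbf e_{i+1}=\mathbf e_i\mathbf e_{i+1}\mathbf e_i=\mathbf e_{i+1}\mathbf e_i^2$ and $\mathbf f_{i+1}\mathbf f_i^2=\mathbf f_i\mathbf f_{i+1}\mathbf f_i=\mathbf f_i^2\mathbf f_{i+1}$; - $[\mathbf e_i,\mathbf e_j]=[\mathbf f_i,\mathbf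 f_j]=0$ for $|i-j|>1$; - $\mathbf e_i\mathbf e_{i+1}\mathbf k_i=\mathbf k_{i+1}\mathbf e_i\mathbf e_{i+1}$ and $\mathbf f_{i+1}\mathbf f_i\mathbf k_{i+1}=\mathbf k_i\mathbf f_{i+1}\mathbf f_i$. It is a bialgebra with $\Delta(\mathbf e_i)=1\otimes\mathbf e_i+\mathbf e_i\otimes\mathbf k_i$, $\Delta(\mathbf f_i)=\mathbf k_{i+1}\otimes\mathbf f_i+\mathbf f_i\otimes1$, $\Delta(\mathbf k_i)=\mathbf k_i\otimes\mathbf k_i$. It acts on $V_0=\mathbb C^n$ (basis $\bar\xi_1,\dots,\bar\xi_n$) by $\mathbf e_i\mapsto E_{i,i+1}$, $\mathbf f_i\mapsto E_{i+1,i}$, $\mathbf k_i\mapsto\sum_{j\ne i}E_{j,j}$, and hence on $V_0^{\otimes r}$ via the iterated coproduct. $\mathbf H_r(0)$ is the $0$-Hecke algebra (generators $\bar\pi_i$, $\bar\pi_i^2=-\bar\pi_i$, braid relations). It acts on the right of $V_0^{\otimes r}$: $\mathbf v\bar\pi_i$ equals $\mathbf v$ with factors $i,i+1$ swapped, $0$, or $-\mathbf v$, according as $k_i<k_{i+1}$, $k_i=k_{i+1}$, or $k_i>k_{i+1}$, where $\mathbf v=\bar\xi_{k_1}\otimes\dots\otimes\bar\xi_{k_r}$. This action commutes with the $U_0(\mathfrak{gl}_n)$-action. $\mathbf S_0(n,r)$, the complex $0$-Schur algebra with Jensen–Su basis $\{e_A\}_{A\in M_n(r)}$, is identified with $\mathrm{End}_{\mathbf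 H_r(0)}(V_0^{\otimes r})$ as follows. Let $\phi_0:\bigoplus_\lambda\bar x_\lambda\mathbf H_r(0)\cong V_0^{\otimes r}$, $\bar x_\lambda h\mapsto\bar\xi_{1}^{\otimes\lambda_1}\otimes\dots\otimes\bar\xi_n^{\otimes\lambda_n}h$, where $\bar x_\lambda=\sum_{w\in\mathfrak S_\lambda}\bar\pi_w$. Then $e_A$ corresponds to $\bar x_\nu h\mapsto\delta_{\mathrm{co}(A),\nu}\big(\sum_{x\in\mathfrak S_{\mathrm{ro}(A)}d_A\mathfrak S_{\mathrm{co}(A)}}\bar\pi_x\big)h$, where $d_A$ is the shortest element of the double coset $\mathfrak S_{\mathrm{ro}(A)}w_A\mathfrak S_{\mathrm{co}(A)}$ and $w_A\in\mathfrak S_r$ satisfies $a_{i,j}=|R_i^{\mathrm{ro}(A)}\cap w_AR_j^{\mathrm{co}(A)}|$, with $R_i^\lambda=\{x:\lambda_1+\dots+\lambda_{i-1}<x\le\lambda_1+\dots+\lambda_i\}$. $k_\mu=e_{\mathrm{diag}(\mu)}$, $e_i=\sum_\lambda e_{D_\lambda-E_{i+1,i+1}+E_{i,i+1}}$, $f_i=\sum_\lambda e_{D_\lambda-E_{i,i}+E_{i+1,i}}$ (sums over $\lambda\in\Lambda(n,r)$ with nonnegative matrices). $\psi_{n,r}$ is the homomorphism induced by the $U_0(\mathfrak{gl}_n)$-action on $V_0^{\otimes r}$, whose image lies in $\mathrm{End}_{\mathbf H_r(0)}(V_0^{\otimes r})\cong\mathbf S_0(n,r)$. *)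

theory Defs
  imports Complex_Main "HOL-Combinatorics.Permutations"
begin

text \<open>
  A basis tensor of V0^{\<otimes> r} (V0 = C^n with basis xi_1..xi_n) is
  a word w = [k_1,...,k_r] (a nat list of length r with entries in {1..n}).
  A vector of V0^{\<otimes> r} is a function word => complex (only values on
  words n r matter).  A linear endomorphism is given by the images of basis
  tensors: T :: word => vector, and it acts on vectors by zlin.
  Permutations of S_r are bijections of {1..r}; products are function
  compositions; s_i swaps i and i+1.  Compositions lambda in Lambda(n,r)
  are nat lists of length n summing to r, with lambda_i = lambda ! (i-1).
  Matrices A in M_n(r) are functions nat => nat => nat supported on
  {1..n} x {1..n}.
\<close>

type_synonym zword = "nat list"
type_synonym zvec = "zword \<Rightarrow> complex"
type_synonym zop = "zword \<Rightarrow> zvec"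

definition zwords :: "nat \<Rightarrow> nat \<Rightarrow> zword set" where
  "zwords n r = {w. length w = r \<and> set w \<subseteq> {1..n}}"

definition zbvec :: "zword \<Rightarrow> zvec" where
  "zbvec w = (\<lambda>u. if u = w then 1 else 0)"

definition zlin :: "nat \<Rightarrow> nat \<Rightarrow> zop \<Rightarrow> zvec \<Rightarrow> zvec" where
  "zlin n r T v = (\<lambda>u. \<Sum>w\<in>zwords n r. v w * T w u)"

section \<open>The right action of the 0-Hecke algebra H_r(0) on V0^{\<otimes> r}\<close>

text \<open>v pi_i on a basis tensor (i is 1-based: factors i, i+1 = list positions i-1, i)\<close>
definition hgen_basis :: "nat \<Rightarrow> zop" where
  "hgen_basis i w =
     (if w ! (i - 1) < w ! i then zbvec (w[i - 1 := w ! i, i := w ! (i - 1)])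
      else if w ! (i - 1) = w ! i then (\<lambda>_. 0)
      else (\<lambda>u. - zbvec w u))"

definition hgen :: "nat \<Rightarrow> nat \<Rightarrow> nat \<Rightarrow> zvec \<Rightarrow> zvec" where
  "hgen n r i v = zlin n r (hgen_basis i) v"

definition sref :: "nat \<Rightarrow> nat \<Rightarrow> nat" where
  "sref i = (\<lambda>x. if x = i then i + 1 else if x = i + 1 then i else x)"

definition perm_word :: "nat \<Rightarrow> nat list \<Rightarrow> (nat \<Rightarrow> nat) \<Rightarrow> bool" where
  "perm_word r is x \<longleftrightarrow> set is \<subseteq> {1..<r} \<and> foldr (\<lambda>i f. sref i \<circ> f) is id = x"

definition perm_len :: "nat \<Rightarrow> (nat \<Rightarrow> nat) \<Rightarrow> nat" where
  "perm_len r x = (LEAST k. \<exists>is. perm_word r is x \<and> length is = k)"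

definition reduced_word :: "nat \<Rightarrow> (nat \<Rightarrow> nat) \<Rightarrow> nat list" where
  "reduced_word r x = (SOME is. perm_word r is x \<and> length is = perm_len r x)"

definition hperm :: "nat \<Rightarrow> nat \<Rightarrow> zvec \<Rightarrow> (nat \<Rightarrow> nat) \<Rightarrow> zvec" where
  "hperm n r v x = fold (hgen n r) (reduced_word r x) v"

section \<open>The 0-Schur algebra S_0(n,r) as End_{H_r(0)}(V0^{\<otimes> r})\<close>

definition Lambda :: "nat \<Rightarrow> nat \<Rightarrow> nat list set" where
  "Lambda n r = {\<nu>. length \<nu> = n \<and> sum_list \<nu> = r}"

definition xi :: "nat list \<Rightarrow> zword" where
  "xi \<nu> = concat (map (\<lambda>i. replicate (\<nu> ! (i - 1)) i) [1..<length \<nu> + 1])"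

definition Rset :: "nat list \<Rightarrow> nat \<Rightarrow> nat set" where
  "Rset \<nu> i = {sum_list (take (i - 1) \<nu>)<..sum_list (take i \<nu>)}"

definition young :: "nat \<Rightarrow> nat \<Rightarrow> nat list \<Rightarrow> (nat \<Rightarrow> nat) set" where
  "young n r \<nu> = {p. p permutes {1..r} \<and> (\<forall>i\<in>{1..n}. p ` Rset \<nu> i = Rset \<nu> i)}"

definition rowsum :: "nat \<Rightarrow> (nat \<Rightarrow> nat \<Rightarrow> nat) \<Rightarrow> nat list" where
  "rowsum n A = map (\<lambda>i. \<Sum>j=1..n. A i j) [1..<n + 1]"

definition colsum :: "nat \<Rightarrow> (nat \<Rightarrow> nat \<Rightarrow> nat) \<Rightarrow> nat list" where
  "colsum n A = map (\<lambda>j. \<Sum>i=1..n. A i j) [1..<n + 1]"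

definition wA :: "nat \<Rightarrow> nat \<Rightarrow> (nat \<Rightarrow> nat \<Rightarrow> nat) \<Rightarrow> (nat \<Rightarrow> nat)" where
  "wA n r A = (SOME w. w permutes {1..r} \<and>
      (\<forall>i\<in>{1..n}. \<forall>j\<in>{1..n}.
         A i j = card (Rset (rowsum n A) i \<inter> w ` Rset (colsum n A) j)))"

definition dcoset :: "nat \<Rightarrow> nat \<Rightarrow> (nat \<Rightarrow> nat \<Rightarrow> nat) \<Rightarrow> (nat \<Rightarrow> nat) \<Rightarrow> (nat \<Rightarrow> nat) set" where
  "dcoset n r A w = {a \<circ> w \<circ> b | a b. a \<in> young n r (rowsum n A) \<and> b \<in> young n r (colsum n A)}"

definition dA :: "nat \<Rightarrow> nat \<Rightarrow> (nat \<Rightarrow> nat \<Rightarrow> nat) \<Rightarrow> (nat \<Rightarrow> nat)" where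
  "dA n r A = (ARG_MIN (perm_len r) x. x \<in> dcoset n r A (wA n r A))"

text \<open>e_A as H_r(0)-endomorphism of V0^{\<otimes> r} (transported along phi_0):
  xi_nu h \<mapsto> delta_{co(A),nu} xi_{ro(A)} (sum over the double coset of pi_x) h,
  tested on the basis elements h = pi_y of H_r(0).\<close>
definition schur_prop :: "nat \<Rightarrow> nat \<Rightarrow> (nat \<Rightarrow> nat \<Rightarrow> nat) \<Rightarrow> zop \<Rightarrow> bool" where
  "schur_prop n r A T \<longleftrightarrow>
     (\<forall>w u. w \<notin> zwords n r \<or> u \<notin> zwords n r \<longrightarrow> T w u = 0) \<and>
     (\<forall>\<nu>\<in>Lambda n r. \<forall>y. y permutes {1..r} \<longrightarrow>
        zlin n r T (hperm n r (zbvec (xi \<nu>)) y) =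
          (if colsum n A = \<nu>
           then (\<lambda>u. \<Sum>x\<in>dcoset n r A (dA n r A).
                        hperm n r (hperm n r (zbvec (xi (rowsum n A))) x) y u)
           else (\<lambda>_. 0)))"

definition eA :: "nat \<Rightarrow> nat \<Rightarrow> (nat \<Rightarrow> nat \<Rightarrow> nat) \<Rightarrow> zop" where
  "eA n r A = (THE T. schur_prop n r A T)"

definition diagm :: "nat list \<Rightarrow> nat \<Rightarrow> nat \<Rightarrow> nat" where
  "diagm \<nu> i j = (if i = j \<and> 1 \<le> i \<and> i \<le> length \<nu> then \<nu> ! (i - 1) else 0)"

definition unitm :: "nat \<Rightarrow> nat \<Rightarrow> nat \<Rightarrow> nat \<Rightarrow> nat" where
  "unitm a b i j = (if i = a \<and> j = b then 1 else 0)"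

definition k_mu :: "nat \<Rightarrow> nat \<Rightarrow> nat list \<Rightarrow> zop" where
  "k_mu n r \<mu> = eA n r (diagm \<mu>)"

definition schur_e :: "nat \<Rightarrow> nat \<Rightarrow> nat \<Rightarrow> zop" where
  "schur_e n r i = (\<lambda>w u. \<Sum>l\<in>{l\<in>Lambda n r. 1 \<le> l ! i}.
      eA n r (\<lambda>a b. diagm l a b - unitm (i + 1) (i + 1) a b + unitm i (i + 1) a b) w u)"

definition schur_f :: "nat \<Rightarrow> nat \<Rightarrow> nat \<Rightarrow> zop" where
  "schur_f n r i = (\<lambda>w u. \<Sum>l\<in>{l\<in>Lambda n r. 1 \<le> l ! (i - 1)}.
      eA n r (\<lambda>a b. diagm l a b - unitm i i a b + unitm (i + 1) i a b) w u)"

section \<open>The U_0(gl_n)-action on V0^{\<otimes> r} (the map psi_{n,r} on generators)\<close>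

text \<open>Operators on V0 = C^n, given by images of basis vectors xi_k (k \<in> {1..n}).\<close>
definition vunit :: "nat \<Rightarrow> nat \<Rightarrow> complex" where
  "vunit a = (\<lambda>m. if m = a then 1 else 0)"

definition matE :: "nat \<Rightarrow> nat \<Rightarrow> nat \<Rightarrow> nat \<Rightarrow> complex" where
  "matE a b = (\<lambda>k. if k = b then vunit a else (\<lambda>_. 0))"

definition matK :: "nat \<Rightarrow> nat \<Rightarrow> nat \<Rightarrow> complex" where
  "matK i = (\<lambda>k. if k = i then (\<lambda>_. 0) else vunit k)"

definition tensor_op :: "nat \<Rightarrow> nat \<Rightarrow> (nat \<Rightarrow> nat \<Rightarrow> nat \<Rightarrow> complex) \<Rightarrow> zop" where
  "tensor_op n r ops = (\<lambda>w u. if w \<in> zwords n r \<and> u \<in> zwords n r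
      then \<Prod>p<r. ops p (w ! p) (u ! p) else 0)"

text \<open>Iterated coproducts:
  Delta^{(r)}(e_i) = sum_j 1 \<otimes>..\<otimes> 1 \<otimes> e_i \<otimes> k_i \<otimes>..\<otimes> k_i,
  Delta^{(r)}(f_i) = sum_j k_{i+1} \<otimes>..\<otimes> k_{i+1} \<otimes> f_i \<otimes> 1 \<otimes>..\<otimes> 1,
  Delta^{(r)}(k_i) = k_i \<otimes>..\<otimes> k_i.\<close>
definition psi_e :: "nat \<Rightarrow> nat \<Rightarrow> nat \<Rightarrow> zop" where
  "psi_e n r i = (\<lambda>w u. \<Sum>j<r. tensor_op n r
      (\<lambda>p. if p < j then vunit else if p = j then matE i (i + 1) else matK i) w u)"

definition psi_f :: "nat \<Rightarrow> nat \<Rightarrow> nat \<Rightarrow> zop" where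
  "psi_f n r i = (\<lambda>w u. \<Sum>j<r. tensor_op n r
      (\<lambda>p. if p < j then matK (i + 1) else if p = j then matE (i + 1) i else vunit) w u)"

definition psi_k :: "nat \<Rightarrow> nat \<Rightarrow> nat \<Rightarrow> zop" where
  "psi_k n r i = tensor_op n r (\<lambda>p. matK i)"

end

theory Submission
  imports Defs
begin


declare upt_Suc[simp del]

definition swp :: "nat \<Rightarrow> 'a list \<Rightarrow> 'a list" where
  "swp a w = w[a := w ! Suc a, Suc a := w ! a]"

definition invset :: "nat list \<Rightarrow> (nat \<times> nat) set" where
  "invset w = {(p, q). p < q \<and> q < length w \<and> w ! q < w ! p}"

definition winv :: "nat list \<Rightarrow> nat" where
  "winv w = card (invset w)"

definition pw :: "nat \<Rightarrow> (nat \<Rightarrow> nat) \<Rightarrow> nat list" where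
  "pw r p = map p [1..<Suc r]"

definition pinv :: "nat \<Rightarrow> (nat \<Rightarrow> nat) \<Rightarrow> nat" where
  "pinv r p = winv (pw r p)"

definition wact :: "nat \<Rightarrow> nat list \<Rightarrow> (nat \<Rightarrow> nat) \<Rightarrow> nat list" where
  "wact r v x = map (\<lambda>m. v ! (x m - 1)) [1..<Suc r]"

fun prodw :: "nat list \<Rightarrow> nat \<Rightarrow> nat" where
  "prodw [] = id"
| "prodw (i # is) = sref i \<circ> prodw is"

lemma finite_invset[simp]: "finite (invset w)"
  by (rule finite_subset[of _ "{..<length w} \<times> {..<length w}"]) (auto simp: invset_def)

lemma length_swp[simp]: "length (swp a w) = length w"
  by (simp add: swp_def)

lemma swp_nth: "Suc a < length w \<Longrightarrow> p < length w \<Longrightarrow>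
   swp a w ! p = w ! (Transposition.transpose a (Suc a) p)"
  by (auto simp: swp_def nth_list_update transpose_def)

lemma swp_swp[simp]: "Suc a < length w \<Longrightarrow> swp a (swp a w) = w"
  by (rule nth_equalityI) (auto simp: swp_nth transpose_def)

lemma swp_eq: "Suc a < length w \<Longrightarrow> w ! a = w ! Suc a \<Longrightarrow> swp a w = w"
  by (rule nth_equalityI) (auto simp: swp_nth transpose_def)

lemma winv_swp_aux:
  assumes a: "Suc a < length w"
  shows "invset (swp a w) - {(a, Suc a)} =
     (\<lambda>(p,q). (Transposition.transpose a (Suc a) p, Transposition.transpose a (Suc a) q)) ` (invset w - {(a, Suc a)})"
proof -
  let ?t = "Transposition.transpose a (Suc a)"
  have tt: "?t (?t x) = x" for x by simp
  have mono: "p < q \<Longrightarrow> (p, q) \<noteq> (a, Suc a) \<Longrightarrow> ?t p < ?t q" for p q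
    by (auto simp: transpose_def)
  have lt: "x < length w \<Longrightarrow> ?t x < length w" for x using a by (auto simp: transpose_def)
  show ?thesis
  proof (rule set_eqI, clarify)
    fix p q
    show "((p, q) \<in> invset (swp a w) - {(a, Suc a)}) =
          ((p, q) \<in> (\<lambda>(p,q). (?t p, ?t q)) ` (invset w - {(a, Suc a)}))"
    proof
      assume h: "(p, q) \<in> invset (swp a w) - {(a, Suc a)}"
      hence "(?t p, ?t q) \<in> invset w - {(a, Suc a)}"
        using a mono[of p q] lt swp_nth[OF a]
        by (auto simp: invset_def) (auto simp: transpose_def split: if_splits)
      moreover have "(p, q) = (\<lambda>(p,q). (?t p, ?t q)) (?t p, ?t q)" by simp
      ultimately show "(p, q) \<in> (\<lambda>(p,q). (?t p, ?t q)) ` (invset w - {(a, Suc a)})" by blast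
    next
      assume "(p, q) \<in> (\<lambda>(p,q). (?t p, ?t q)) ` (invset w - {(a, Suc a)})"
      then obtain p' q' where h: "(p', q') \<in> invset w - {(a, Suc a)}" and e: "p = ?t p'" "q = ?t q'"
        by auto
      show "(p, q) \<in> invset (swp a w) - {(a, Suc a)}"
        using h e a mono[of p' q'] lt swp_nth[OF a]
        by (auto simp: invset_def) (auto simp: transpose_def split: if_splits)
    qed
  qed
qed

lemma winv_swp:
  assumes a: "Suc a < length w"
  shows "winv (swp a w) + (if w ! Suc a < w ! a then 1 else 0) = winv w + (if w ! a < w ! Suc a then 1 else 0)"
proof -
  let ?t = "Transposition.transpose a (Suc a)"
  have inj: "inj_on (\<lambda>(p,q). (?t p, ?t q)) X" for X
    by (rule inj_onI) (auto simp: transpose_def split: if_splits)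
  have c: "card (invset (swp a w) - {(a, Suc a)}) = card (invset w - {(a, Suc a)})"
    unfolding winv_swp_aux[OF a] by (rule card_image[OF inj])
  have m1: "((a, Suc a) \<in> invset (swp a w)) = (w ! a < w ! Suc a)"
    using a by (auto simp: invset_def swp_nth)
  have m2: "((a, Suc a) \<in> invset w) = (w ! Suc a < w ! a)"
    using a by (auto simp: invset_def)
  have f1: "finite (invset (swp a w))" "finite (invset w)" by simp_all
  consider (lt) "w ! a < w ! Suc a" | (gt) "w ! Suc a < w ! a" | (eq) "w ! a = w ! Suc a"
    using less_linear by blast
  thus ?thesis
  proof cases
    case lt
    hence i1: "(a, Suc a) \<in> invset (swp a w)" "(a, Suc a) \<notin> invset w" using m1 m2 by auto
    hence "card (invset (swp a w)) = Suc (card (invset w))"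
      using c card_Diff_singleton[OF i1(1)] card_gt_0_iff[of "invset (swp a w)"] f1 by auto
    thus ?thesis using lt by (simp add: winv_def)
  next
    case gt
    hence i1: "(a, Suc a) \<notin> invset (swp a w)" "(a, Suc a) \<in> invset w" using m1 m2 by auto
    hence "card (invset w) = Suc (card (invset (swp a w)))"
      using c card_Diff_singleton[OF i1(2)] card_gt_0_iff[of "invset w"] f1 by auto
    thus ?thesis using gt by (simp add: winv_def)
  next
    case eq thus ?thesis using swp_eq[OF a] by simp
  qed
qed

lemma winv_sorted: assumes "sorted w" shows "winv w = 0"
proof -
  have "invset w = {}"
  proof (rule equals0I)
    fix x assume "x \<in> invset w"
    then obtain p q where "x = (p, q)" "p < q" "q < length w" "w ! q < w ! p" by (auto simp: invset_def)
    thus False using sorted_nth_mono[OF assms, of p q] by simp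
  qed
  thus ?thesis by (simp add: winv_def)
qed

lemma winv0_sorted: assumes "winv w = 0" shows "sorted w"
  unfolding sorted_iff_nth_mono_less
proof (intro allI impI)
  fix i j assume "i < j" "j < length w"
  show "w ! i \<le> w ! j"
  proof (rule ccontr)
    assume "\<not> w ! i \<le> w ! j"
    hence "(i, j) \<in> invset w" using \<open>i < j\<close> \<open>j < length w\<close> by (auto simp: invset_def)
    hence "invset w \<noteq> {}" by blast
    thus False using assms card_0_eq[OF finite_invset[of w]] by (simp add: winv_def)
  qed
qed

lemma winv_desc: assumes "winv w \<noteq> 0" shows "\<exists>a. Suc a < length w \<and> w ! Suc a < w ! a"
proof (rule ccontr)
  assume h: "\<not> (\<exists>a. Suc a < length w \<and> w ! Suc a < w ! a)"
  have h': "\<forall>a. Suc a < length w \<longrightarrow> w ! a \<le> w ! Suc a"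
  proof (intro allI impI)
    fix a assume "Suc a < length w"
    hence "\<not> w ! Suc a < w ! a" using h by auto
    thus "w ! a \<le> w ! Suc a" by (simp add: not_less)
  qed
  have "sorted w" unfolding sorted_iff_nth_Suc using h' by simp
  thus False using assms by (simp add: winv_sorted)
qed

lemma sref_transpose: "sref i = Transposition.transpose i (Suc i)"
  by (rule ext) (auto simp: sref_def transpose_def)

lemma sref_permutes: "1 \<le> i \<Longrightarrow> i < r \<Longrightarrow> sref i permutes {1..r}"
  unfolding sref_transpose by (rule permutes_swap_id) auto

lemma sref_sref[simp]: "sref i \<circ> sref i = id"
  by (rule ext) (auto simp: sref_def)

lemma sref_sref'[simp]: "sref i (sref i x) = x"
  by (auto simp: sref_def)

lemma map_sref: assumes "1 \<le> j" "j < r"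
  shows "map (f \<circ> sref j) [1..<Suc r] = swp (j - 1) (map f [1..<Suc r])"
proof (rule nth_equalityI)
  fix k assume "k < length (map (f \<circ> sref j) [1..<Suc r])"
  hence k: "k < r" by simp
  have "swp (j - 1) (map f [1..<Suc r]) ! k = map f [1..<Suc r] ! (Transposition.transpose (j-1) (Suc (j-1)) k)"
    using assms k by (intro swp_nth) auto
  also have "\<dots> = f (Suc (Transposition.transpose (j-1) (Suc (j-1)) k))"
    using assms k by (subst nth_map) (auto simp: transpose_def)
  finally show "map (f \<circ> sref j) [1..<Suc r] ! k = swp (j - 1) (map f [1..<Suc r]) ! k"
    using assms k by (auto simp: transpose_def sref_def)
qed (simp add: swp_def)

lemma pinv_sref: assumes "1 \<le> j" "j < r"
  shows "pinv r (p \<circ> sref j) + (if p (Suc j) < p j then 1 else 0) = pinv r p + (if p j < p (Suc j) then 1 else 0)"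
proof -
  have "pw r (p \<circ> sref j) = swp (j - 1) (pw r p)" unfolding pw_def by (rule map_sref[OF assms])
  moreover have "pw r p ! (j - 1) = p j" "pw r p ! Suc (j - 1) = p (Suc j)" using assms
    by (auto simp: pw_def nth_append)
  moreover have "Suc (j - 1) < length (pw r p)" using assms by (simp add: pw_def)
  ultimately show ?thesis unfolding pinv_def using winv_swp[of "j - 1" "pw r p"] by simp
qed

lemma wact_sref: assumes "1 \<le> j" "j < r"
  shows "wact r v (x \<circ> sref j) = swp (j - 1) (wact r v x)"
proof -
  have "wact r v (x \<circ> sref j) = map ((\<lambda>m. v ! (x m - 1)) \<circ> sref j) [1..<Suc r]"
    by (simp add: wact_def o_def)
  also have "\<dots> = swp (j - 1) (map (\<lambda>m. v ! (x m - 1)) [1..<Suc r])"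
    by (rule map_sref[OF assms])
  finally show ?thesis by (simp add: wact_def)
qed

lemma foldr_prodw: "foldr (\<lambda>i f. sref i \<circ> f) is id = prodw is"
  by (induction "is") auto

lemma prodw_append: "prodw (js @ [j]) = prodw js \<circ> sref j"
  by (induction js) (auto simp: o_assoc)

lemma prodw_permutes: "set is \<subseteq> {1..<r} \<Longrightarrow> prodw is permutes {1..r}"
proof (induction "is" rule: rev_induct)
  case Nil thus ?case by (simp only: prodw.simps permutes_id)
next
  case (snoc j js)
  hence "prodw js permutes {1..r}" "1 \<le> j" "j < r" by auto
  thus ?case unfolding prodw_append using permutes_compose[OF sref_permutes[of j r]] by blast
qed

lemma pinv_id: "pinv r id = 0"
proof -
  have "pw r id = [1..<Suc r]" by (simp add: pw_def)
  thus ?thesis by (simp add: pinv_def winv_sorted)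
qed

lemma pinv_prodw_le: "set is \<subseteq> {1..<r} \<Longrightarrow> pinv r (prodw is) \<le> length is"
proof (induction "is" rule: rev_induct)
  case Nil thus ?case by (simp only: prodw.simps pinv_id)
next
  case (snoc j js)
  hence h: "pinv r (prodw js) \<le> length js" "1 \<le> j" "j < r" by auto
  have "pinv r (prodw js \<circ> sref j) \<le> pinv r (prodw js) + 1"
    using pinv_sref[of j r "prodw js"] h(2,3) by (auto split: if_splits)
  moreover have "length (js @ [j]) = length js + 1" by simp
  ultimately show ?case using h(1) unfolding prodw_append by linarith
qed

lemma pw_permutes_eq: assumes "p permutes {1..r}" shows "set (pw r p) = {1..r}" "distinct (pw r p)"
proof -
  show "set (pw r p) = {1..r}" using permutes_image[OF assms]
    by (simp add: pw_def atLeastLessThanSuc_atLeastAtMost)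
  show "distinct (pw r p)" using permutes_inj_on[OF assms]
    by (simp add: pw_def distinct_map permutes_inj_on[OF assms])
qed

lemma pinv0_id: assumes "p permutes {1..r}" "pinv r p = 0" shows "p = id"
proof -
  have s: "sorted (pw r p)" using assms(2) winv0_sorted by (simp add: pinv_def)
  have "pw r p = sorted_list_of_set {1..r}"
    using sorted_list_of_set.idem_if_sorted_distinct[OF s pw_permutes_eq(2)[OF assms(1)]]
      pw_permutes_eq(1)[OF assms(1)] by simp
  also have "\<dots> = [1..<Suc r]" by (simp add: atLeastLessThanSuc_atLeastAtMost[symmetric])
  finally have e: "map p [1..<Suc r] = [1..<Suc r]" by (simp add: pw_def)
  show ?thesis
  proof (rule ext)
    fix k show "p k = id k"
    proof (cases "k \<in> {1..r}")
      case True
      hence "k - 1 < r" by auto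
      hence "map p [1..<Suc r] ! (k - 1) = [1..<Suc r] ! (k - 1)" using e by simp
      moreover have "map p [1..<Suc r] ! (k - 1) = p k" using True by (subst nth_map) (auto simp: nth_upt)
      moreover have "[1..<Suc r] ! (k - 1) = k" using True by (auto simp: nth_upt)
      ultimately show ?thesis by simp
    next
      case False thus ?thesis using assms(1) by (simp add: permutes_not_in)
    qed
  qed
qed

lemma exists_word: "p permutes {1..r} \<Longrightarrow> \<exists>is. set is \<subseteq> {1..<r} \<and> prodw is = p \<and> length is = pinv r p"
proof (induction "pinv r p" arbitrary: p)
  case 0
  hence "p = id" using pinv0_id[of p r] by simp
  thus ?case using 0(1) by (intro exI[of _ "[]"]) simp
next
  case (Suc m)
  obtain a where a: "Suc a < length (pw r p)" "pw r p ! Suc a < pw r p ! a"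
    using winv_desc[of "pw r p"] Suc(2) by (auto simp: pinv_def)
  define j where "j = Suc a"
  have j: "1 \<le> j" "j < r" using a(1) by (auto simp: j_def pw_def)
  have d: "p (Suc j) < p j" using a j by (simp add: pw_def nth_append j_def)
  have pp: "p \<circ> sref j permutes {1..r}" using Suc(3) sref_permutes[OF j] permutes_compose by blast
  have "pinv r (p \<circ> sref j) = m" using pinv_sref[OF j, of p] d Suc(2) by simp
  then obtain is' where "set is' \<subseteq> {1..<r}" "prodw is' = p \<circ> sref j" "length is' = m"
    using Suc(1)[OF _ pp] by metis
  thus ?case using j Suc(2)
    by (intro exI[of _ "is' @ [j]"]) (auto simp: prodw_append o_assoc[symmetric])
qed

lemma perm_word_iff: "perm_word r is x \<longleftrightarrow> set is \<subseteq> {1..<r} \<and> prodw is = x"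
  by (simp add: perm_word_def foldr_prodw)

lemma perm_len_eq: assumes "p permutes {1..r}" shows "perm_len r p = pinv r p"
  unfolding perm_len_def
proof (rule Least_equality)
  show "\<exists>is. perm_word r is p \<and> length is = pinv r p"
    using exists_word[OF assms] by (auto simp: perm_word_iff)
next
  fix y assume "\<exists>is. perm_word r is p \<and> length is = y"
  thus "pinv r p \<le> y" using pinv_prodw_le by (auto simp: perm_word_iff)
qed

lemma reduced_word_props: assumes "p permutes {1..r}"
  shows "set (reduced_word r p) \<subseteq> {1..<r}" "prodw (reduced_word r p) = p"
    "length (reduced_word r p) = pinv r p"
proof -
  have "\<exists>is. perm_word r is p \<and> length is = perm_len r p"
    using exists_word[OF assms] perm_len_eq[OF assms] by (auto simp: perm_word_iff)
  hence "perm_word r (reduced_word r p) p \<and> length (reduced_word r p) = perm_len r p"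
    unfolding reduced_word_def by (rule someI_ex)
  thus "set (reduced_word r p) \<subseteq> {1..<r}" "prodw (reduced_word r p) = p"
    "length (reduced_word r p) = pinv r p" using perm_len_eq[OF assms] by (auto simp: perm_word_iff)
qed


lemma finite_zwords[simp]: "finite (zwords n r)"
proof -
  have "zwords n r = {xs. set xs \<subseteq> {1..n} \<and> length xs = r}" by (auto simp: zwords_def)
  thus ?thesis using finite_lists_length_eq[of "{1..n}" r] by simp
qed

lemma zlin_zbvec: "w \<in> zwords n r \<Longrightarrow> zlin n r T (zbvec w) = T w"
proof (rule ext)
  fix u assume w: "w \<in> zwords n r"
  have "(\<Sum>w'\<in>zwords n r. zbvec w w' * T w' u) = (\<Sum>w'\<in>zwords n r. if w' = w then T w u else 0)"
    by (rule sum.cong) (auto simp: zbvec_def)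
  thus "zlin n r T (zbvec w) u = T w u" using w by (simp add: zlin_def)
qed

lemma zlin_zero: "zlin n r T (\<lambda>_. 0) = (\<lambda>_. 0)"
  by (simp add: zlin_def)

lemma zlin_sum: "zlin n r T (\<lambda>u. \<Sum>x\<in>X. f x u) = (\<lambda>u. \<Sum>x\<in>X. zlin n r T (f x) u)"
  by (rule ext) (simp add: zlin_def sum_distrib_right sum.swap[of _ X])

lemma zlin_neg: "zlin n r T (\<lambda>u. - f u) = (\<lambda>u. - zlin n r T f u)"
  by (rule ext) (simp add: zlin_def sum_negf)

lemma zwords_length: "w \<in> zwords n r \<Longrightarrow> length w = r"
  by (simp add: zwords_def)

lemma zwords_nth: "w \<in> zwords n r \<Longrightarrow> k < r \<Longrightarrow> w ! k \<in> {1..n}"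
  by (auto simp: zwords_def dest!: nth_mem)

lemma swp_zwords: "w \<in> zwords n r \<Longrightarrow> Suc a < r \<Longrightarrow> swp a w \<in> zwords n r"
  unfolding zwords_def swp_def by (simp add: set_swap)

lemma hgen_basis_swp: "1 \<le> i \<Longrightarrow> hgen_basis i w =
   (if w ! (i - 1) < w ! i then zbvec (swp (i - 1) w)
    else if w ! (i - 1) = w ! i then (\<lambda>_. 0) else (\<lambda>u. - zbvec w u))"
  by (simp add: hgen_basis_def swp_def)

lemma hgen_zbvec: "w \<in> zwords n r \<Longrightarrow> hgen n r i (zbvec w) = hgen_basis i w"
  by (simp add: hgen_def zlin_zbvec)

lemma hgen_zero: "hgen n r i (\<lambda>_. 0) = (\<lambda>_. 0)"
  by (simp add: hgen_def zlin_zero)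

lemma wact_zwords: assumes "v \<in> zwords n r" "x permutes {1..r}" shows "wact r v x \<in> zwords n r"
proof -
  have "\<And>m. m \<in> {1..r} \<Longrightarrow> v ! (x m - 1) \<in> {1..n}"
  proof -
    fix m assume "m \<in> {1..r}"
    hence "x m \<in> {1..r}" using permutes_in_image[OF assms(2)] by simp
    thus "v ! (x m - 1) \<in> {1..n}" using zwords_nth[OF assms(1)] by auto
  qed
  thus ?thesis by (auto simp: zwords_def wact_def atLeastLessThanSuc_atLeastAtMost)
qed

lemma wact_id: "length v = r \<Longrightarrow> wact r v id = v"
  by (intro nth_equalityI) (auto simp: wact_def nth_upt)

lemma id_lam_facts[simp]: "(\<lambda>a. a) permutes S" "pinv r (\<lambda>a. a) = 0" "prodw [] = (\<lambda>a. a)"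
  using permutes_id[of S] pinv_id[of r] by (simp_all add: id_def)

lemma wact_id': "length v = r \<Longrightarrow> wact r v (\<lambda>a. a) = v"
  by (intro nth_equalityI) (auto simp: wact_def nth_upt)

lemma wact_nth: "k < r \<Longrightarrow> wact r v x ! k = v ! (x (Suc k) - 1)"
  by (simp add: wact_def nth_upt)

lemma pw_nth: "k < r \<Longrightarrow> pw r x ! k = x (Suc k)"
  by (simp add: pw_def nth_upt)

lemma sorted_lt: "sorted v \<Longrightarrow> i < length v \<Longrightarrow> k < length v \<Longrightarrow> v ! i < v ! k \<Longrightarrow> i < k"
proof (rule ccontr)
  assume "sorted v" "i < length v" "k < length v" "v ! i < v ! k" "\<not> i < k"
  hence "v ! k \<le> v ! i" using sorted_nth_mono[of v k i] by simp
  thus False using \<open>v ! i < v ! k\<close> by simp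
qed

lemma perm_range: assumes "x permutes {1..r}" "m \<in> {1..r}" shows "x m \<in> {1..r}"
  using assms(2) by (simp only: permutes_in_image[OF assms(1)])

lemma winv_wact_le: assumes "sorted v" "length v = r" "x permutes {1..r}"
  shows "winv (wact r v x) \<le> pinv r x"
proof -
  have "invset (wact r v x) \<subseteq> invset (pw r x)"
  proof
    fix pq assume "pq \<in> invset (wact r v x)"
    then obtain p q where pq: "pq = (p, q)" "p < q" "q < r" "wact r v x ! q < wact r v x ! p"
      by (auto simp: invset_def wact_def)
    hence "v ! (x (Suc q) - 1) < v ! (x (Suc p) - 1)" by (simp add: wact_nth)
    moreover have "x (Suc q) \<in> {1..r}" "x (Suc p) \<in> {1..r}" using pq perm_range[OF assms(3)] by auto
    ultimately have "x (Suc q) - 1 < x (Suc p) - 1"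
      using sorted_lt[OF assms(1), of "x (Suc q) - 1" "x (Suc p) - 1"] assms(2) by auto
    hence "x (Suc q) < x (Suc p)" by simp
    thus "pq \<in> invset (pw r x)" using pq by (simp add: invset_def pw_nth pw_def)
  qed
  thus ?thesis unfolding pinv_def winv_def by (rule card_mono[OF finite_invset])
qed

lemma fold_hgen:
  assumes v: "sorted v" "v \<in> zwords n r"
  shows "set is \<subseteq> {1..<r} \<Longrightarrow> pinv r (prodw is) = length is \<Longrightarrow>
    fold (hgen n r) is (zbvec v) =
    (if winv (wact r v (prodw is)) = length is then zbvec (wact r v (prodw is)) else (\<lambda>_. 0))"
proof (induction "is" rule: rev_induct)
  case Nil
  have lv: "length v = r" using v zwords_length by blast
  show ?case using winv_sorted[OF v(1)] by (simp add: wact_id[OF lv] wact_id'[OF lv])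
next
  case (snoc j js)
  have lv: "length v = r" using v zwords_length by blast
  have j: "1 \<le> j" "j < r" and sjs: "set js \<subseteq> {1..<r}" using snoc.prems(1) by auto
  let ?p = "prodw js"
  have pp: "?p permutes {1..r}" using prodw_permutes[OF sjs] .
  have le: "pinv r ?p \<le> length js" using pinv_prodw_le[OF sjs] .
  have ps: "pinv r (?p \<circ> sref j) + (if ?p (Suc j) < ?p j then 1 else 0) = pinv r ?p + (if ?p j < ?p (Suc j) then 1 else 0)"
    using pinv_sref[OF j] .
  have e1: "pinv r (?p \<circ> sref j) = Suc (length js)"
    using snoc.prems(2) unfolding prodw_append length_append_singleton .
  have inc: "?p j < ?p (Suc j)" and eqp: "pinv r ?p = length js"
    using ps e1 le by (auto split: if_splits)
  have IH: "fold (hgen n r) js (zbvec v) =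
    (if winv (wact r v ?p) = length js then zbvec (wact r v ?p) else (\<lambda>_. 0))"
    using snoc.IH[OF sjs eqp] .
  let ?W = "wact r v ?p"
  have Wz: "?W \<in> zwords n r" using wact_zwords[OF v(2) pp] .
  have lW: "length ?W = r" by (simp add: wact_def)
  have Wa: "?W ! (j - 1) = v ! (?p j - 1)" "?W ! Suc (j - 1) = v ! (?p (Suc j) - 1)"
    using j by (simp_all add: wact_nth)
  have pr: "?p j \<in> {1..r}" "?p (Suc j) \<in> {1..r}" using perm_range[OF pp] j by auto
  have Wle: "?W ! (j - 1) \<le> ?W ! Suc (j - 1)"
    unfolding Wa using sorted_nth_mono[OF v(1), of "?p j - 1" "?p (Suc j) - 1"] inc pr lv by auto
  have wx: "wact r v (prodw (js @ [j])) = swp (j - 1) ?W"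
    by (simp add: prodw_append wact_sref[OF j])
  have sj: "Suc (j - 1) < length ?W" using j lW by simp
  have wsw: "winv (swp (j - 1) ?W) + (if ?W ! Suc (j - 1) < ?W ! (j - 1) then 1 else 0) =
             winv ?W + (if ?W ! (j - 1) < ?W ! Suc (j - 1) then 1 else 0)"
    using winv_swp[OF sj] .
  have hg: "hgen n r j (zbvec ?W) = (if ?W ! (j - 1) < ?W ! Suc (j - 1) then zbvec (swp (j - 1) ?W)
      else if ?W ! (j - 1) = ?W ! Suc (j - 1) then (\<lambda>_. 0) else (\<lambda>u. - zbvec ?W u))"
    using hgen_zbvec[OF Wz, of j] hgen_basis_swp[OF j(1), of ?W] j by simp
  show ?case
  proof (cases "winv ?W = length js")
    case True
    show ?thesis
    proof (cases "?W ! (j - 1) < ?W ! Suc (j - 1)")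
      case True2: True
      thus ?thesis using True IH hg wsw wx by simp
    next
      case False
      hence eq: "?W ! (j - 1) = ?W ! Suc (j - 1)" using Wle by simp
      hence "swp (j - 1) ?W = ?W" using swp_eq[OF sj] by simp
      thus ?thesis using True IH hg eq wx by simp
    qed
  next
    case False
    have "winv ?W \<le> length js" using winv_wact_le[OF v(1) lv pp] eqp by simp
    hence "winv (swp (j - 1) ?W) \<noteq> length (js @ [j])" using False wsw by (auto split: if_splits)
    thus ?thesis using False IH wx hgen_zero by simp
  qed
qed

lemma hperm_sorted:
  assumes v: "sorted v" "v \<in> zwords n r" and x: "x permutes {1..r}"
  shows "hperm n r (zbvec v) x =
    (if winv (wact r v x) = pinv r x then zbvec (wact r v x) else (\<lambda>_. 0))"
  using fold_hgen[OF v reduced_word_props(1)[OF x]] reduced_word_props[OF x]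
  by (simp add: hperm_def)

lemma dist_exists:
  assumes v: "sorted v" "length v = r"
  shows "length W = r \<Longrightarrow> mset W = mset v \<Longrightarrow>
    \<exists>y. y permutes {1..r} \<and> wact r v y = W \<and> winv W = pinv r y"
proof (induction "winv W" arbitrary: W)
  case 0
  hence "sorted W" using winv0_sorted by simp
  hence "W = v" using properties_for_sort[OF 0(3) \<open>sorted W\<close>] properties_for_sort[OF refl v(1)] by simp
  thus ?case using v 0(1) by (intro exI[of _ id]) (simp add: wact_id wact_id')
next
  case (Suc m)
  obtain a where a: "Suc a < length W" "W ! Suc a < W ! a" using winv_desc[of W] Suc(2) by auto
  let ?W' = "swp a W"
  have m: "winv ?W' = m" using winv_swp[OF a(1)] a(2) Suc(2) by simp
  have ms: "mset ?W' = mset v" using Suc(4) a(1) by (simp add: swp_def mset_swap)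
  obtain y' where y': "y' permutes {1..r}" "wact r v y' = ?W'" "winv ?W' = pinv r y'"
    using Suc(1)[OF m[symmetric] _ ms] Suc(3) by auto
  define j where "j = Suc a"
  have j: "1 \<le> j" "j < r" using a(1) Suc(3) by (auto simp: j_def)
  have "?W' ! a = W ! Suc a" "?W' ! Suc a = W ! a" using a(1) by (auto simp: swp_nth transpose_def)
  hence "wact r v y' ! a < wact r v y' ! Suc a" using y'(2) a(2) by simp
  hence "v ! (y' j - 1) < v ! (y' (Suc j) - 1)" using j by (simp add: wact_nth j_def)
  moreover have "y' j \<in> {1..r}" "y' (Suc j) \<in> {1..r}" using perm_range[OF y'(1)] j by auto
  ultimately have "y' j - 1 < y' (Suc j) - 1"
    using sorted_lt[OF v(1), of "y' j - 1" "y' (Suc j) - 1"] v(2) by auto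
  hence inc: "y' j < y' (Suc j)" by simp
  have pe: "pinv r (y' \<circ> sref j) = Suc (pinv r y')" using pinv_sref[OF j, of y'] inc by simp
  have we: "wact r v (y' \<circ> sref j) = W"
    using wact_sref[OF j, of v y'] y'(2) a(1) by (simp add: j_def)
  show ?case
    using pe we y' m Suc(2) permutes_compose[OF sref_permutes[OF j] y'(1)]
    by (intro exI[of _ "y' \<circ> sref j"]) simp
qed

lemma dist_unique:
  assumes v: "sorted v" "length v = r"
  shows "y permutes {1..r} \<Longrightarrow> y' permutes {1..r} \<Longrightarrow> wact r v y = wact r v y' \<Longrightarrow>
    winv (wact r v y) = pinv r y \<Longrightarrow> winv (wact r v y') = pinv r y' \<Longrightarrow> y = y'"
proof (induction "winv (wact r v y)" arbitrary: y y')
  case 0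
  have "pinv r y = 0" using 0 by simp
  hence "y = id" using pinv0_id 0(2) by blast
  moreover have "pinv r y' = 0" using 0 by simp
  hence "y' = id" using pinv0_id 0(3) by blast
  ultimately show ?case by simp
next
  case (Suc m)
  let ?W = "wact r v y"
  have lW: "length ?W = r" by (simp add: wact_def)
  obtain a where a: "Suc a < length ?W" "?W ! Suc a < ?W ! a" using winv_desc[of ?W] Suc(2) by auto
  define j where "j = Suc a"
  have j: "1 \<le> j" "j < r" using a(1) lW by (auto simp: j_def)
  have dec: "z (Suc j) < z j" if z: "z permutes {1..r}" "wact r v z = ?W" for z
  proof -
    have "wact r v z ! Suc a < wact r v z ! a" using a(2) z(2) by simp
    hence "v ! (z (Suc j) - 1) < v ! (z j - 1)" using j by (simp add: wact_nth j_def)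
    moreover have "z j \<in> {1..r}" "z (Suc j) \<in> {1..r}" using perm_range[OF z(1)] j by auto
    ultimately have "z (Suc j) - 1 < z j - 1"
      using sorted_lt[OF v(1), of "z (Suc j) - 1" "z j - 1"] v(2) by auto
    thus ?thesis by simp
  qed
  have key: "winv (wact r v (z \<circ> sref j)) = m \<and> pinv r (z \<circ> sref j) = m \<and> z \<circ> sref j permutes {1..r}
     \<and> wact r v (z \<circ> sref j) = swp a ?W"
    if z: "z permutes {1..r}" "wact r v z = ?W" "winv (wact r v z) = pinv r z" for z
  proof -
    have d: "z (Suc j) < z j" using dec[OF z(1,2)] .
    have pe: "Suc (pinv r (z \<circ> sref j)) = pinv r z" using pinv_sref[OF j, of z] d by simp
    have we: "wact r v (z \<circ> sref j) = swp a ?W" using wact_sref[OF j, of v z] z(2) by (simp add: j_def)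
    have "Suc (winv (swp a ?W)) = winv ?W" using winv_swp[OF a(1)] a(2) by simp
    thus ?thesis using pe we z Suc(2) permutes_compose[OF sref_permutes[OF j] z(1)] by simp
  qed
  have k1: "winv (wact r v (y \<circ> sref j)) = m" "pinv r (y \<circ> sref j) = m" "y \<circ> sref j permutes {1..r}"
    "wact r v (y \<circ> sref j) = swp a ?W" using key[OF Suc(3) refl Suc(6)] by auto
  have k2: "pinv r (y' \<circ> sref j) = m" "y' \<circ> sref j permutes {1..r}"
    "wact r v (y' \<circ> sref j) = swp a ?W" using key[OF Suc(4) Suc(5)[symmetric] Suc(7)] by auto
  have "y \<circ> sref j = y' \<circ> sref j"
    using Suc(1)[OF k1(1)[symmetric] k1(3) k2(2)] k1 k2 by simp
  hence "\<And>x. y (sref j (sref j x)) = y' (sref j (sref j x))" by (metis comp_apply)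
  thus ?case by (intro ext) simp
qed


fun xiR :: "nat \<Rightarrow> nat list \<Rightarrow> nat list" where
  "xiR b [] = []"
| "xiR b (x # xs) = replicate x b @ xiR (Suc b) xs"

lemma xiR_eq: "concat (map (\<lambda>i. replicate (\<nu> ! (i - b)) i) [b..<b + length \<nu>]) = xiR b \<nu>"
proof (induction \<nu> arbitrary: b)
  case Nil thus ?case by simp
next
  case (Cons x xs)
  have u: "[b..<b + length (x # xs)] = b # [Suc b..<Suc (b + length xs)]"
    by (simp add: upt_conv_Cons)
  have m: "map (\<lambda>i. replicate ((x # xs) ! (i - b)) i) [Suc b..<Suc (b + length xs)] =
        map (\<lambda>i. replicate (xs ! (i - Suc b)) i) [Suc b..<Suc (b + length xs)]"
  proof (rule map_cong[OF refl])
    fix i assume "i \<in> set [Suc b..<Suc (b + length xs)]"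
    hence "i - b = Suc (i - Suc b)" by auto
    thus "replicate ((x # xs) ! (i - b)) i = replicate (xs ! (i - Suc b)) i" by simp
  qed
  have ih: "concat (map (\<lambda>i. replicate (xs ! (i - Suc b)) i) [Suc b..<Suc (b + length xs)]) = xiR (Suc b) xs"
    using Cons.IH[of "Suc b"] by simp
  show ?case unfolding u list.map concat.simps m ih by simp
qed

lemma xi_xiR: "xi \<nu> = xiR 1 \<nu>"
  unfolding xi_def using xiR_eq[of \<nu> 1] by (simp add: add.commute)

lemma length_xiR[simp]: "length (xiR b \<nu>) = sum_list \<nu>"
  by (induction \<nu> arbitrary: b) auto

lemma set_xiR: "set (xiR b \<nu>) \<subseteq> {b..<b + length \<nu>}"
  by (induction \<nu> arbitrary: b) (auto, fastforce+)

lemma sorted_xiR: "sorted (xiR b \<nu>)"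
proof (induction \<nu> arbitrary: b)
  case Nil thus ?case by simp
next
  case (Cons x xs)
  have "\<forall>y\<in>set (xiR (Suc b) xs). b \<le> y" using set_xiR[of "Suc b" xs] by auto
  thus ?case using Cons.IH[of "Suc b"] by (auto simp: sorted_append)
qed

lemma count_xiR: "count_list (xiR b \<nu>) c = (if b \<le> c \<and> c < b + length \<nu> then \<nu> ! (c - b) else 0)"
proof (induction \<nu> arbitrary: b)
  case Nil thus ?case by simp
next
  case (Cons x xs)
  have cr: "count_list (replicate x b) c = (if c = b then x else 0)"
    by (induction x) auto
  show ?case using Cons.IH[of "Suc b"] cr
    by (cases "c = b") (auto simp: nth_Cons' count_list_append)
qed

lemma nth_xiR: "m < sum_list \<nu> \<Longrightarrow> c < length \<nu> \<Longrightarrow>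
  (xiR b \<nu> ! m = b + c) = (sum_list (take c \<nu>) \<le> m \<and> m < sum_list (take (Suc c) \<nu>))"
proof (induction \<nu> arbitrary: b m c)
  case Nil thus ?case by simp
next
  case (Cons x xs)
  show ?case
  proof (cases "m < x")
    case True
    hence "xiR b (x # xs) ! m = b" by (simp add: nth_append)
    thus ?thesis using True by (cases c) auto
  next
    case False
    hence e: "xiR b (x # xs) ! m = xiR (Suc b) xs ! (m - x)" by (simp add: nth_append)
    have m': "m - x < sum_list xs" using Cons.prems(1) False by simp
    show ?thesis
    proof (cases c)
      case 0
      have "xiR (Suc b) xs ! (m - x) \<in> set (xiR (Suc b) xs)" using m' by simp
      hence "xiR (Suc b) xs ! (m - x) \<ge> Suc b" using set_xiR[of "Suc b" xs] by auto
      thus ?thesis using e 0 False by auto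
    next
      case (Suc c')
      hence c': "c' < length xs" using Cons.prems(2) by simp
      have "(xiR (Suc b) xs ! (m - x) = Suc b + c') =
        (sum_list (take c' xs) \<le> m - x \<and> m - x < sum_list (take (Suc c') xs))"
        using Cons.IH[OF m' c'] .
      thus ?thesis using e Suc False by auto
    qed
  qed
qed

lemma xi_Lambda: assumes "\<nu> \<in> Lambda n r"
  shows "xi \<nu> \<in> zwords n r" "sorted (xi \<nu>)" "length (xi \<nu>) = r"
proof -
  have ln: "length \<nu> = n" "sum_list \<nu> = r" using assms by (auto simp: Lambda_def)
  show "length (xi \<nu>) = r" using ln by (simp add: xi_xiR)
  thus "xi \<nu> \<in> zwords n r" using set_xiR[of 1 \<nu>] ln by (auto simp: zwords_def xi_xiR)
  show "sorted (xi \<nu>)" by (simp add: xi_xiR sorted_xiR)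
qed

lemma count_xi: assumes "\<nu> \<in> Lambda n r"
  shows "count_list (xi \<nu>) c = (if c \<in> {1..n} then \<nu> ! (c - 1) else 0)"
  using assms by (auto simp: xi_xiR count_xiR Lambda_def)

lemma Rset_iff: assumes "\<nu> \<in> Lambda n r" "m \<in> {1..r}"
  shows "m \<in> Rset \<nu> c \<longleftrightarrow> c \<in> {1..n} \<and> xi \<nu> ! (m - 1) = c"
proof -
  have ln: "length \<nu> = n" "sum_list \<nu> = r" using assms by (auto simp: Lambda_def)
  have m: "m - 1 < sum_list \<nu>" using assms(2) ln by auto
  show ?thesis
  proof (cases "c \<in> {1..n}")
    case True
    hence c: "c - 1 < length \<nu>" "c = 1 + (c - 1)" "Suc (c - 1) = c" using ln by auto
    have "(xi \<nu> ! (m - 1) = c) = (sum_list (take (c - 1) \<nu>) \<le> m - 1 \<and> m - 1 < sum_list (take c \<nu>))"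
      using nth_xiR[OF m c(1), of 1] c by (simp add: xi_xiR)
    moreover have "m \<in> Rset \<nu> c \<longleftrightarrow> sum_list (take (c - 1) \<nu>) \<le> m - 1 \<and> m - 1 < sum_list (take c \<nu>)"
      using assms(2) by (auto simp: Rset_def)
    ultimately show ?thesis using True by blast
  next
    case False
    hence "take (c - 1) \<nu> = take c \<nu>" using ln
      by (cases "c = 0") (auto simp: take_all)
    hence "Rset \<nu> c = {}" by (simp add: Rset_def)
    thus ?thesis using False by blast
  qed
qed

lemma Rset_sub: assumes "\<nu> \<in> Lambda n r" shows "Rset \<nu> c \<subseteq> {1..r}"
proof -
  have "sum_list (take c \<nu>) \<le> sum_list \<nu>"
    by (metis append_take_drop_id le_add1 sum_list_append)
  thus ?thesis using assms by (auto simp: Rset_def Lambda_def)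
qed

definition cont :: "nat \<Rightarrow> nat list \<Rightarrow> nat list" where
  "cont n w = map (\<lambda>c. count_list w c) [1..<Suc n]"

lemma cont_Lambda: assumes "w \<in> zwords n r" shows "cont n w \<in> Lambda n r"
proof -
  have "sum_list (cont n w) = sum (count_list w) {1..<Suc n}"
    by (simp add: cont_def interv_sum_list_conv_sum_set_nat)
  also have "\<dots> = length w" using assms
    by (intro sum_count_set) (auto simp: zwords_def atLeastLessThanSuc_atLeastAtMost)
  finally show ?thesis using assms by (simp add: Lambda_def cont_def zwords_def)
qed

lemma cont_nth: "c \<in> {1..n} \<Longrightarrow> cont n w ! (c - 1) = count_list w c"
  by (auto simp: cont_def nth_upt)

lemma mset_xi_cont: assumes "w \<in> zwords n r" shows "mset (xi (cont n w)) = mset w"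
proof (rule multiset_eqI)
  fix c
  show "count (mset (xi (cont n w))) c = count (mset w) c"
  proof (cases "c \<in> {1..n}")
    case True thus ?thesis using count_xi[OF cont_Lambda[OF assms]] cont_nth[OF True]
      by (simp add: count_mset)
  next
    case False
    hence "c \<notin> set w" using assms by (auto simp: zwords_def)
    thus ?thesis unfolding count_mset count_xi[OF cont_Lambda[OF assms]] if_not_P[OF False]
      by (simp add: count_notin)
  qed
qed

lemma cont_swp: "Suc a < length w \<Longrightarrow> cont n (swp a w) = cont n w"
proof -
  assume a: "Suc a < length w"
  have "mset (swp a w) = mset w" using a by (simp add: swp_def mset_swap)
  hence "count_list (swp a w) c = count_list w c" for c by (metis count_mset)
  thus ?thesis by (simp add: cont_def)
qed

lemma cont_xi: assumes "\<nu> \<in> Lambda n r" shows "cont n (xi \<nu>) = \<nu>"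
proof (rule nth_equalityI)
  show "length (cont n (xi \<nu>)) = length \<nu>" using assms by (simp add: cont_def Lambda_def)
  fix k assume "k < length (cont n (xi \<nu>))"
  hence k: "Suc k \<in> {1..n}" by (simp add: cont_def)
  show "cont n (xi \<nu>) ! k = \<nu> ! k" using cont_nth[OF k] count_xi[OF assms] k by simp
qed


lemma word_repr:
  assumes w: "w \<in> zwords n r"
  obtains y where "y permutes {1..r}" "hperm n r (zbvec (xi (cont n w))) y = zbvec w"
proof -
  let ?v = "xi (cont n w)"
  have L: "cont n w \<in> Lambda n r" using cont_Lambda[OF w] .
  have v: "sorted ?v" "length ?v = r" "?v \<in> zwords n r" using xi_Lambda[OF L] by auto
  have lw: "length w = r" using w zwords_length by blast
  obtain y where y: "y permutes {1..r}" "wact r ?v y = w" "winv w = pinv r y"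
    using dist_exists[OF v(1,2) lw] mset_xi_cont[OF w] by metis
  have "hperm n r (zbvec ?v) y = zbvec w" using hperm_sorted[OF v(1,3) y(1)] y by simp
  thus ?thesis using that y(1) by blast
qed

lemma schur_unique: assumes "schur_prop n r A T1" "schur_prop n r A T2" shows "T1 = T2"
proof (intro ext)
  fix w u
  show "T1 w u = T2 w u"
  proof (cases "w \<in> zwords n r \<and> u \<in> zwords n r")
    case False thus ?thesis using assms by (auto simp: schur_prop_def)
  next
    case True
    hence w: "w \<in> zwords n r" by simp
    obtain y where y: "y permutes {1..r}" "hperm n r (zbvec (xi (cont n w))) y = zbvec w"
      using word_repr[OF w] by blast
    have L: "cont n w \<in> Lambda n r" using cont_Lambda[OF w] .
    have "T1 w = zlin n r T1 (hperm n r (zbvec (xi (cont n w))) y)" using y(2) zlin_zbvec[OF w] by simp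
    also have "\<dots> = zlin n r T2 (hperm n r (zbvec (xi (cont n w))) y)"
      using assms L y(1) unfolding schur_prop_def by simp
    also have "\<dots> = T2 w" using y(2) zlin_zbvec[OF w] by simp
    finally show ?thesis by simp
  qed
qed

lemma eA_eq: "schur_prop n r A T \<Longrightarrow> eA n r A = T"
  unfolding eA_def by (rule the_equality) (auto intro: schur_unique)

definition supp :: "nat \<Rightarrow> nat \<Rightarrow> zop \<Rightarrow> bool" where
  "supp n r T \<longleftrightarrow> (\<forall>w u. w \<notin> zwords n r \<or> u \<notin> zwords n r \<longrightarrow> T w u = 0)"

definition commC :: "nat \<Rightarrow> nat \<Rightarrow> zop \<Rightarrow> bool" where
  "commC n r T \<longleftrightarrow> (\<forall>a. Suc a < r \<longrightarrow> (\<forall>w\<in>zwords n r. \<forall>u\<in>zwords n r.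
     (if w ! a < w ! Suc a then T (swp a w) u else if w ! a = w ! Suc a then 0 else - T w u) =
     (if u ! Suc a < u ! a then T w (swp a u) - T w u else 0)))"

lemma swp_nth_a: "Suc a < length w \<Longrightarrow> swp a w ! a = w ! Suc a"
  by (simp add: swp_def nth_list_update)

lemma swp_nth_Sa: "Suc a < length w \<Longrightarrow> swp a w ! Suc a = w ! a"
  by (simp add: swp_def nth_list_update)

lemma hgen_basis_val:
  assumes a: "Suc a < r" and w': "w' \<in> zwords n r"
  shows "hgen_basis (Suc a) w' u =
    (if w' = swp a u \<and> u \<in> zwords n r \<and> u ! Suc a < u ! a then 1 else 0) -
    (if w' = u \<and> u ! Suc a < u ! a then 1 else 0)"
proof -
  have lw: "length w' = r" using w' zwords_length by blast
  have sw: "swp a w' \<in> zwords n r" using swp_zwords[OF w' a] .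
  have hb: "hgen_basis (Suc a) w' = (if w' ! a < w' ! Suc a then zbvec (swp a w')
    else if w' ! a = w' ! Suc a then (\<lambda>_. 0) else (\<lambda>u. - zbvec w' u))"
    using hgen_basis_swp[of "Suc a" w'] by simp
  have e1: "(w' = swp a u \<and> u \<in> zwords n r) \<longleftrightarrow> u = swp a w'"
  proof
    assume h: "w' = swp a u \<and> u \<in> zwords n r"
    hence "length u = r" using zwords_length by blast
    thus "u = swp a w'" using h a by simp
  next
    assume "u = swp a w'" thus "w' = swp a u \<and> u \<in> zwords n r" using lw a sw by simp
  qed
  show ?thesis
  proof (cases "w' ! a < w' ! Suc a")
    case True
    have "u = swp a w' \<Longrightarrow> u ! Suc a < u ! a" using True lw a by (simp add: swp_nth_a swp_nth_Sa)
    moreover have "w' = u \<Longrightarrow> \<not> u ! Suc a < u ! a" using True by auto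
    ultimately show ?thesis using hb True e1 by (auto simp: zbvec_def)
  next
    case False
    show ?thesis
    proof (cases "w' ! a = w' ! Suc a")
      case True
      have "u = swp a w' \<Longrightarrow> \<not> u ! Suc a < u ! a" using True lw a by (simp add: swp_nth_a swp_nth_Sa)
      moreover have "w' = u \<Longrightarrow> \<not> u ! Suc a < u ! a" using True by auto
      ultimately show ?thesis using hb True e1 by auto
    next
      case False2: False
      hence gt: "w' ! Suc a < w' ! a" using False by simp
      have "u = swp a w' \<Longrightarrow> \<not> u ! Suc a < u ! a" using gt lw a by (simp add: swp_nth_a swp_nth_Sa)
      thus ?thesis using hb False False2 gt e1 by (auto simp: zbvec_def)
    qed
  qed
qed

lemma sum_ind: "finite Z \<Longrightarrow> (\<Sum>w'\<in>Z. f w' * (if w' = c \<and> P then 1 else 0)) = (if c \<in> Z \<and> P then f c else (0::complex))"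
  by (cases P) (simp_all add: if_distrib[where f="\<lambda>x. _ * x"] cong: if_cong)

lemma comm_basis:
  assumes sp: "supp n r T" and cc: "commC n r T" and a: "Suc a < r" and w: "w \<in> zwords n r"
  shows "zlin n r T (hgen_basis (Suc a) w) u = zlin n r (hgen_basis (Suc a)) (T w) u"
proof -
  have lw: "length w = r" using w zwords_length by blast
  have sw: "swp a w \<in> zwords n r" using swp_zwords[OF w a] .
  have L: "zlin n r T (hgen_basis (Suc a) w) u =
    (if w ! a < w ! Suc a then T (swp a w) u else if w ! a = w ! Suc a then 0 else - T w u)"
    using hgen_basis_swp[of "Suc a" w] zlin_zbvec[OF sw, of T] zlin_zbvec[OF w, of T]
      zlin_zero[of n r T] zlin_neg[of n r T "zbvec w"] by simp
  have "zlin n r (hgen_basis (Suc a)) (T w) u =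
     (\<Sum>w'\<in>zwords n r. T w w' * ((if w' = swp a u \<and> u \<in> zwords n r \<and> u ! Suc a < u ! a then 1 else 0) -
       (if w' = u \<and> u ! Suc a < u ! a then 1 else 0)))"
    unfolding zlin_def by (rule sum.cong[OF refl]) (simp add: hgen_basis_val[OF a])
  also have "\<dots> = (\<Sum>w'\<in>zwords n r. T w w' * (if w' = swp a u \<and> (u \<in> zwords n r \<and> u ! Suc a < u ! a) then 1 else 0)) -
       (\<Sum>w'\<in>zwords n r. T w w' * (if w' = u \<and> u ! Suc a < u ! a then 1 else 0))"
    by (simp add: right_diff_distrib sum_subtractf)
  also have "\<dots> = (if swp a u \<in> zwords n r \<and> (u \<in> zwords n r \<and> u ! Suc a < u ! a) then T w (swp a u) else 0) -
      (if u \<in> zwords n r \<and> u ! Suc a < u ! a then T w u else 0)"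
    by (simp only: sum_ind[OF finite_zwords])
  finally have R: "zlin n r (hgen_basis (Suc a)) (T w) u =
      (if swp a u \<in> zwords n r \<and> (u \<in> zwords n r \<and> u ! Suc a < u ! a) then T w (swp a u) else 0) -
      (if u \<in> zwords n r \<and> u ! Suc a < u ! a then T w u else 0)" .
  show ?thesis
  proof (cases "u \<in> zwords n r")
    case True
    have su: "swp a u \<in> zwords n r" using swp_zwords[OF True a] .
    show ?thesis using cc a w True L R su unfolding commC_def by auto
  next
    case False
    have "T (swp a w) u = 0" "T w u = 0" using sp False unfolding supp_def by auto
    thus ?thesis using L R False by simp
  qed
qed

lemma comm_hgen:
  assumes sp: "supp n r T" and cc: "commC n r T" and i: "1 \<le> i" "i < r"
  shows "zlin n r T (hgen n r i v) = hgen n r i (zlin n r T v)"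
proof (rule ext)
  fix u
  obtain a where ia: "i = Suc a" using i by (cases i) auto
  have a: "Suc a < r" using i ia by simp
  have sw: "zlin n r S (zlin n r H v) u = (\<Sum>w\<in>zwords n r. v w * zlin n r S (H w) u)" for S H
  proof -
    have "zlin n r S (zlin n r H v) u = (\<Sum>w'\<in>zwords n r. (\<Sum>w\<in>zwords n r. v w * H w w') * S w' u)"
      by (simp add: zlin_def)
    also have "\<dots> = (\<Sum>w'\<in>zwords n r. \<Sum>w\<in>zwords n r. v w * (H w w' * S w' u))"
      by (simp add: sum_distrib_right mult.assoc)
    also have "\<dots> = (\<Sum>w\<in>zwords n r. \<Sum>w'\<in>zwords n r. v w * (H w w' * S w' u))"
      by (rule sum.swap)
    also have "\<dots> = (\<Sum>w\<in>zwords n r. v w * zlin n r S (H w) u)"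
      by (simp add: zlin_def sum_distrib_left)
    finally show ?thesis .
  qed
  have "zlin n r T (hgen n r i v) u = (\<Sum>w\<in>zwords n r. v w * zlin n r T (hgen_basis i w) u)"
    unfolding hgen_def by (rule sw)
  also have "\<dots> = (\<Sum>w\<in>zwords n r. v w * zlin n r (hgen_basis i) (T w) u)"
    by (rule sum.cong[OF refl]) (simp add: ia comm_basis[OF sp cc a])
  also have "\<dots> = hgen n r i (zlin n r T v) u"
    unfolding hgen_def by (rule sw[symmetric])
  finally show "zlin n r T (hgen n r i v) u = hgen n r i (zlin n r T v) u" .
qed

lemma comm_fold:
  assumes sp: "supp n r T" and cc: "commC n r T"
  shows "set is \<subseteq> {1..<r} \<Longrightarrow> zlin n r T (fold (hgen n r) is v) = fold (hgen n r) is (zlin n r T v)"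
proof (induction "is" arbitrary: v)
  case Nil thus ?case by simp
next
  case (Cons i js)
  hence "1 \<le> i" "i < r" by auto
  thus ?case using Cons comm_hgen[OF sp cc] by simp
qed

lemma comm_hperm:
  assumes sp: "supp n r T" and cc: "commC n r T" and y: "y permutes {1..r}"
  shows "zlin n r T (hperm n r v y) = hperm n r (zlin n r T v) y"
  unfolding hperm_def using comm_fold[OF sp cc reduced_word_props(1)[OF y]] .

lemma hgen_sum: "hgen n r i (\<lambda>u. \<Sum>x\<in>X. f x u) = (\<lambda>u. \<Sum>x\<in>X. hgen n r i (f x) u)"
  unfolding hgen_def by (rule zlin_sum)

lemma fold_hgen_sum: "fold (hgen n r) is (\<lambda>u. \<Sum>x\<in>X. f x u) = (\<lambda>u. \<Sum>x\<in>X. fold (hgen n r) is (f x) u)"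
proof (induction "is" arbitrary: f)
  case Nil thus ?case by simp
next
  case (Cons i js)
  show ?case by (simp add: hgen_sum Cons.IH)
qed

lemma hperm_sum: "hperm n r (\<lambda>u. \<Sum>x\<in>X. f x u) y = (\<lambda>u. \<Sum>x\<in>X. hperm n r (f x) y u)"
  unfolding hperm_def by (rule fold_hgen_sum)

lemma hperm_zero: "hperm n r (\<lambda>_. 0) y = (\<lambda>_. 0)"
  using hperm_sum[of n r "\<lambda>x u. 0" "{}" y] by simp

lemma schur_prop_intro:
  assumes sp: "supp n r T" and cc: "commC n r T"
    and val: "\<And>\<nu>. \<nu> \<in> Lambda n r \<Longrightarrow> T (xi \<nu>) = (if colsum n A = \<nu>
           then (\<lambda>u. \<Sum>x\<in>dcoset n r A (dA n r A). hperm n r (zbvec (xi (rowsum n A))) x u)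
           else (\<lambda>_. 0))"
  shows "schur_prop n r A T"
  unfolding schur_prop_def
proof (intro conjI ballI allI impI)
  fix w u assume "w \<notin> zwords n r \<or> u \<notin> zwords n r"
  thus "T w u = 0" using sp by (auto simp: supp_def)
next
  fix \<nu> y assume L: "\<nu> \<in> Lambda n r" and y: "y permutes {1..r}"
  have z: "xi \<nu> \<in> zwords n r" using xi_Lambda[OF L] by simp
  have "zlin n r T (hperm n r (zbvec (xi \<nu>)) y) = hperm n r (T (xi \<nu>)) y"
    using comm_hperm[OF sp cc y] zlin_zbvec[OF z] by simp
  thus "zlin n r T (hperm n r (zbvec (xi \<nu>)) y) =
    (if colsum n A = \<nu> then (\<lambda>u. \<Sum>x\<in>dcoset n r A (dA n r A). hperm n r (hperm n r (zbvec (xi (rowsum n A))) x) y u)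
     else (\<lambda>_. 0))"
    using val[OF L] hperm_sum[of n r "\<lambda>x. hperm n r (zbvec (xi (rowsum n A))) x" "dcoset n r A (dA n r A)" y]
      hperm_zero by simp
qed


definition PA :: "nat \<Rightarrow> nat \<Rightarrow> (nat \<Rightarrow> nat \<Rightarrow> nat) \<Rightarrow> (nat \<Rightarrow> nat) \<Rightarrow> bool" where
  "PA n r A x \<longleftrightarrow> x permutes {1..r} \<and>
      (\<forall>i\<in>{1..n}. \<forall>j\<in>{1..n}. A i j = card (Rset (rowsum n A) i \<inter> x ` Rset (colsum n A) j))"

definition Wds :: "nat \<Rightarrow> nat \<Rightarrow> (nat \<Rightarrow> nat \<Rightarrow> nat) \<Rightarrow> nat list set" where
  "Wds n r A = {u \<in> zwords n r. \<forall>i\<in>{1..n}. \<forall>j\<in>{1..n}.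
      A i j = card {k. k < r \<and> xi (colsum n A) ! k = j \<and> u ! k = i}}"

lemma wA_PA: "wA n r A = (SOME w. PA n r A w)"
  by (simp add: wA_def PA_def)

lemma Rset_mem: "\<nu> \<in> Lambda n r \<Longrightarrow> m \<in> Rset \<nu> c \<Longrightarrow> m \<in> {1..r}"
  using Rset_sub by blast

lemma card_img:
  assumes ro: "ro \<in> Lambda n r" and co: "co \<in> Lambda n r" and x: "x permutes {1..r}"
    and ij: "i \<in> {1..n}" "j \<in> {1..n}"
  shows "card (Rset ro i \<inter> x ` Rset co j) =
    card {k. k < r \<and> xi co ! k = j \<and> wact r (xi ro) x ! k = i}"
proof -
  let ?K = "{k. k < r \<and> xi co ! k = j \<and> wact r (xi ro) x ! k = i}"
  have eq: "Rset ro i \<inter> x ` Rset co j = (\<lambda>k. x (Suc k)) ` ?K"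
  proof (intro set_eqI iffI)
    fix m assume "m \<in> Rset ro i \<inter> x ` Rset co j"
    then obtain m' where m: "m \<in> Rset ro i" "m' \<in> Rset co j" "m = x m'" by auto
    have m'r: "m' \<in> {1..r}" using Rset_mem[OF co m(2)] .
    have mr: "m \<in> {1..r}" using Rset_mem[OF ro m(1)] .
    have c1: "xi co ! (m' - 1) = j" using Rset_iff[OF co m'r] m(2) by simp
    have c2: "xi ro ! (m - 1) = i" using Rset_iff[OF ro mr] m(1) by simp
    have "m' - 1 \<in> ?K" using c1 c2 m'r m(3) by (auto simp: wact_nth)
    moreover have "m = x (Suc (m' - 1))" using m'r m(3) by simp
    ultimately show "m \<in> (\<lambda>k. x (Suc k)) ` ?K" by blast
  next
    fix m assume "m \<in> (\<lambda>k. x (Suc k)) ` ?K"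
    then obtain k where k: "k < r" "xi co ! k = j" "wact r (xi ro) x ! k = i" "m = x (Suc k)" by auto
    have kr: "Suc k \<in> {1..r}" using k by simp
    have mr: "m \<in> {1..r}" using perm_range[OF x kr] k(4) by simp
    have "Suc k \<in> Rset co j" using Rset_iff[OF co kr] k ij by simp
    moreover have "m \<in> Rset ro i" using Rset_iff[OF ro mr] k ij by (simp add: wact_nth)
    ultimately show "m \<in> Rset ro i \<inter> x ` Rset co j" using k(4) by blast
  qed
  have inj: "inj_on (\<lambda>k. x (Suc k)) ?K"
    using permutes_inj[OF x] by (auto simp: inj_on_def inj_def)
  show ?thesis unfolding eq by (rule card_image[OF inj])
qed

lemma PA_iff:
  assumes ro: "rowsum n A \<in> Lambda n r" and co: "colsum n A \<in> Lambda n r" and x: "x permutes {1..r}"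
  shows "PA n r A x \<longleftrightarrow> wact r (xi (rowsum n A)) x \<in> Wds n r A"
  using card_img[OF ro co x] wact_zwords[OF xi_Lambda(1)[OF ro] x] x
  by (simp add: PA_def Wds_def)

lemma PA_closed:
  assumes w: "PA n r A w" and a: "a \<in> young n r (rowsum n A)" and b: "b \<in> young n r (colsum n A)"
  shows "PA n r A (a \<circ> w \<circ> b)"
proof -
  have ap: "a permutes {1..r}" and aR: "\<And>i. i \<in> {1..n} \<Longrightarrow> a ` Rset (rowsum n A) i = Rset (rowsum n A) i"
    using a by (auto simp: young_def)
  have bp: "b permutes {1..r}" and bR: "\<And>j. j \<in> {1..n} \<Longrightarrow> b ` Rset (colsum n A) j = Rset (colsum n A) j"
    using b by (auto simp: young_def)
  have wp: "w permutes {1..r}" using w by (simp add: PA_def)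
  have perm: "a \<circ> w \<circ> b permutes {1..r}" using permutes_compose[OF bp permutes_compose[OF wp ap]] by simp
  have "A i j = card (Rset (rowsum n A) i \<inter> (a \<circ> w \<circ> b) ` Rset (colsum n A) j)"
    if ij: "i \<in> {1..n}" "j \<in> {1..n}" for i j
  proof -
    have "(a \<circ> w \<circ> b) ` Rset (colsum n A) j = (a \<circ> w) ` (b ` Rset (colsum n A) j)"
      by (simp only: image_comp)
    also have "\<dots> = (a \<circ> w) ` Rset (colsum n A) j" using bR[OF ij(2)] by simp
    also have "\<dots> = a ` (w ` Rset (colsum n A) j)" by (simp only: image_comp)
    finally have "(a \<circ> w \<circ> b) ` Rset (colsum n A) j = a ` (w ` Rset (colsum n A) j)" .
    hence "Rset (rowsum n A) i \<inter> (a \<circ> w \<circ> b) ` Rset (colsum n A) j =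
        a ` (Rset (rowsum n A) i \<inter> w ` Rset (colsum n A) j)"
      using image_Int[OF permutes_inj[OF ap]] aR[OF ij(1)] by simp
    hence "card (Rset (rowsum n A) i \<inter> (a \<circ> w \<circ> b) ` Rset (colsum n A) j) =
        card (Rset (rowsum n A) i \<inter> w ` Rset (colsum n A) j)"
      using card_image[OF inj_on_subset[OF permutes_inj[OF ap] subset_UNIV]] by simp
    thus ?thesis using w ij by (simp add: PA_def)
  qed
  thus ?thesis using perm by (simp add: PA_def)
qed

lemma fiber_bij:
  assumes "finite S"
  shows "finite T \<Longrightarrow> (\<forall>c. card {s\<in>S. f s = c} = card {t\<in>T. g t = c}) \<Longrightarrow>
    \<exists>b. bij_betw b S T \<and> (\<forall>s\<in>S. g (b s) = f s)"
  using assms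
proof (induction S arbitrary: T rule: finite_induct)
  case empty
  have "T = {}"
  proof (rule ccontr)
    assume "T \<noteq> {}"
    then obtain t where t: "t \<in> T" by blast
    have "card {t'\<in>T. g t' = g t} = 0" using empty.prems(2) by simp
    hence "{t'\<in>T. g t' = g t} = {}" using empty.prems(1) by simp
    thus False using t by blast
  qed
  thus ?case by (simp add: bij_betw_def)
next
  case (insert s S)
  have "card {t\<in>T. g t = f s} = card {s'\<in>insert s S. f s' = f s}" using insert.prems(2) by simp
  also have "\<dots> \<noteq> 0"
  proof -
    have ne: "s \<in> {s'\<in>insert s S. f s' = f s}" by simp
    have fin: "finite {s'\<in>insert s S. f s' = f s}" using insert.hyps(1) by simp
    show ?thesis using ne fin card_0_eq[OF fin] by blast
  qed
  finally have "card {t\<in>T. g t = f s} \<noteq> 0" .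
  hence "{t\<in>T. g t = f s} \<noteq> {}" by (intro notI) simp
  then obtain t where t: "t \<in> T" "g t = f s" by blast
  have fib: "card {s'\<in>S. f s' = c} = card {t'\<in>T - {t}. g t' = c}" for c
  proof -
    have e1: "{s'\<in>insert s S. f s' = c} = (if f s = c then insert s {s'\<in>S. f s' = c} else {s'\<in>S. f s' = c})"
      by auto
    have e2: "{t'\<in>T. g t' = c} = (if g t = c then insert t {t'\<in>T - {t}. g t' = c} else {t'\<in>T - {t}. g t' = c})"
      using t by auto
    have f1: "finite {s'\<in>S. f s' = c}" using insert.hyps(1) by simp
    have f2: "finite {t'\<in>T - {t}. g t' = c}" using insert.prems(1) by simp
    have "card {s'\<in>insert s S. f s' = c} = card {t'\<in>T. g t' = c}" using insert.prems(2) by simp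
    thus ?thesis unfolding e1 e2 using t insert.hyps(2) f1 f2 by (auto split: if_splits)
  qed
  obtain b where b: "bij_betw b S (T - {t})" "\<forall>s'\<in>S. g (b s') = f s'"
    using insert.IH[of "T - {t}"] insert.prems(1) fib by auto
  define b' where "b' = b(s := t)"
  have bS: "\<forall>s'\<in>S. b' s' = b s'" using insert.hyps(2) by (auto simp: b'_def)
  have "bij_betw b' (insert s S) T"
    unfolding bij_betw_def
  proof
    show "inj_on b' (insert s S)"
    proof (rule inj_onI)
      fix x y assume xy: "x \<in> insert s S" "y \<in> insert s S" "b' x = b' y"
      have bi: "\<forall>z\<in>S. b z \<in> T - {t}" using b(1) by (auto simp: bij_betw_def)
      show "x = y"
      proof (cases "x = s")
        case True thus ?thesis using xy bi bS by (auto simp: b'_def)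
      next
        case False
        hence x: "x \<in> S" using xy by simp
        show ?thesis
        proof (cases "y = s")
          case True thus ?thesis using xy bi bS x by (auto simp: b'_def)
        next
          case False
          hence "y \<in> S" using xy by simp
          thus ?thesis using x xy bS b(1) by (auto simp: bij_betw_def inj_on_def)
        qed
      qed
    qed
    have "b' ` S = b ` S" using bS by (intro image_cong) simp_all
    moreover have "b' s = t" by (simp add: b'_def)
    ultimately have "b' ` (insert s S) = insert t (b ` S)" by (simp only: image_insert)
    also have "\<dots> = T" using b(1) t by (auto simp: bij_betw_def)
    finally show "b' ` insert s S = T" .
  qed
  moreover have "\<forall>s'\<in>insert s S. g (b' s') = f s'" using b(2) bS t by (auto simp: b'_def)
  ultimately show ?case by blast
qed

lemma young_intro:
  assumes L: "\<nu> \<in> Lambda n r" and p: "p permutes {1..r}"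
    and pres: "\<And>k. k \<in> {1..r} \<Longrightarrow> xi \<nu> ! (p k - 1) = xi \<nu> ! (k - 1)"
  shows "p \<in> young n r \<nu>"
  unfolding young_def
proof (intro CollectI conjI ballI p)
  fix j assume j: "j \<in> {1..n}"
  show "p ` Rset \<nu> j = Rset \<nu> j"
  proof (intro set_eqI iffI)
    fix m assume "m \<in> p ` Rset \<nu> j"
    then obtain k where k: "k \<in> Rset \<nu> j" "m = p k" by auto
    have kr: "k \<in> {1..r}" using Rset_mem[OF L k(1)] .
    have mr: "m \<in> {1..r}" using perm_range[OF p kr] k by simp
    show "m \<in> Rset \<nu> j" using Rset_iff[OF L kr] Rset_iff[OF L mr] k pres[OF kr] by simp
  next
    fix m assume m: "m \<in> Rset \<nu> j"
    have mr: "m \<in> {1..r}" using Rset_mem[OF L m] .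
    let ?k = "inv p m"
    have pk: "p ?k = m" using permutes_inverses(1)[OF p] by simp
    have kr: "?k \<in> {1..r}" using permutes_in_image[OF permutes_inv[OF p]] mr by simp
    have "?k \<in> Rset \<nu> j" using Rset_iff[OF L kr] Rset_iff[OF L mr] m pres[OF kr] pk by simp
    thus "m \<in> p ` Rset \<nu> j" using pk by (metis imageI)
  qed
qed

lemma xi_letter: assumes L: "\<nu> \<in> Lambda n r" and k: "k \<in> {1..r}" shows "xi \<nu> ! (k - 1) \<in> {1..n}"
  using zwords_nth[OF xi_Lambda(1)[OF L]] k by auto

lemma cnt_shift:
  assumes ro: "ro \<in> Lambda n r" and co: "co \<in> Lambda n r" and x: "x permutes {1..r}"
  shows "card {k\<in>{1..r}. (xi ro ! (x k - 1), xi co ! (k - 1)) = (i, j)} =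
     card {k. k < r \<and> xi co ! k = j \<and> wact r (xi ro) x ! k = i}"
proof -
  have "{k\<in>{1..r}. (xi ro ! (x k - 1), xi co ! (k - 1)) = (i, j)} =
      Suc ` {k. k < r \<and> xi co ! k = j \<and> wact r (xi ro) x ! k = i}"
  proof (intro set_eqI iffI)
    fix m assume "m \<in> {k\<in>{1..r}. (xi ro ! (x k - 1), xi co ! (k - 1)) = (i, j)}"
    hence "m - 1 \<in> {k. k < r \<and> xi co ! k = j \<and> wact r (xi ro) x ! k = i}" "m = Suc (m - 1)"
      by (auto simp: wact_nth)
    thus "m \<in> Suc ` {k. k < r \<and> xi co ! k = j \<and> wact r (xi ro) x ! k = i}" by (metis imageI)
  next
    fix m assume "m \<in> Suc ` {k. k < r \<and> xi co ! k = j \<and> wact r (xi ro) x ! k = i}"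
    thus "m \<in> {k\<in>{1..r}. (xi ro ! (x k - 1), xi co ! (k - 1)) = (i, j)}" by (auto simp: wact_nth)
  qed
  thus ?thesis by (simp add: card_image)
qed

lemma G2:
  assumes ro: "rowsum n A \<in> Lambda n r" and co: "colsum n A \<in> Lambda n r"
    and x: "PA n r A x" and w: "PA n r A w"
  shows "x \<in> dcoset n r A w"
proof -
  let ?ro = "rowsum n A" and ?co = "colsum n A"
  have xp: "x permutes {1..r}" and wp: "w permutes {1..r}" using x w by (auto simp: PA_def)
  define f where "f k = (xi ?ro ! (x k - 1), xi ?co ! (k - 1))" for k
  define g where "g k = (xi ?ro ! (w k - 1), xi ?co ! (k - 1))" for k
  have fib: "card {k\<in>{1..r}. f k = c} = card {k\<in>{1..r}. g k = c}" for c
  proof (cases c)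
    case (Pair i j)
    show ?thesis
    proof (cases "i \<in> {1..n} \<and> j \<in> {1..n}")
      case True
      have "card {k\<in>{1..r}. f k = c} = card (Rset ?ro i \<inter> x ` Rset ?co j)"
        using cnt_shift[OF ro co xp, of i j] card_img[OF ro co xp, of i j] True Pair by (simp add: f_def)
      also have "\<dots> = A i j" using x True by (simp add: PA_def)
      also have "\<dots> = card (Rset ?ro i \<inter> w ` Rset ?co j)" using w True by (simp add: PA_def)
      also have "\<dots> = card {k\<in>{1..r}. g k = c}"
        using cnt_shift[OF ro co wp, of i j] card_img[OF ro co wp, of i j] True Pair by (simp add: g_def)
      finally show ?thesis .
    next
      case False
      have "{k\<in>{1..r}. f k = c} = {}"
        using False Pair xi_letter[OF ro perm_range[OF xp]] xi_letter[OF co] by (auto simp: f_def)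
      moreover have "{k\<in>{1..r}. g k = c} = {}"
        using False Pair xi_letter[OF ro perm_range[OF wp]] xi_letter[OF co] by (auto simp: g_def)
      ultimately show ?thesis by (simp only: card.empty)
    qed
  qed
  obtain b0 where b0: "bij_betw b0 {1..r} {1..r}" "\<forall>k\<in>{1..r}. g (b0 k) = f k"
    using fiber_bij[of "{1..r}" "{1..r}" f g] fib by auto
  define b where "b k = (if k \<in> {1..r} then b0 k else k)" for k
  have bb: "bij_betw b {1..r} {1..r}" using b0(1) by (rule bij_betw_cong[THEN iffD1, rotated]) (simp add: b_def)
  have bp: "b permutes {1..r}" by (rule bij_imp_permutes[OF bb]) (auto simp: b_def)
  have gb: "\<forall>k\<in>{1..r}. g (b k) = f k" using b0(2) by (simp add: b_def)
  have bY: "b \<in> young n r ?co"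
    by (rule young_intro[OF co bp]) (use gb in \<open>auto simp: f_def g_def\<close>)
  define c where "c = w \<circ> b"
  have cp: "c permutes {1..r}" using permutes_compose[OF bp wp] by (simp add: c_def)
  define a where "a = x \<circ> inv c"
  have ap: "a permutes {1..r}" using permutes_compose[OF permutes_inv[OF cp] xp] by (simp add: a_def)
  have aY: "a \<in> young n r ?ro"
  proof (rule young_intro[OF ro ap])
    fix m assume m: "m \<in> {1..r}"
    let ?k = "inv c m"
    have kr: "?k \<in> {1..r}" using permutes_in_image[OF permutes_inv[OF cp]] m by simp
    have ck: "c ?k = m" using permutes_inverses(1)[OF cp] by simp
    have "g (b ?k) = f ?k" using gb kr by simp
    hence "xi ?ro ! (w (b ?k) - 1) = xi ?ro ! (x ?k - 1)" by (simp add: f_def g_def)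
    thus "xi ?ro ! (a m - 1) = xi ?ro ! (m - 1)" using ck by (simp add: a_def c_def)
  qed
  have "a \<circ> w \<circ> b = x \<circ> (inv c \<circ> c)" by (simp add: a_def c_def o_assoc)
  also have "\<dots> = x" using permutes_inv_o(2)[OF cp] by simp
  finally have "x = a \<circ> w \<circ> b" by simp
  thus ?thesis using aY bY unfolding dcoset_def by blast
qed


lemma count_card: "count_list u i = card {k. k < length u \<and> u ! k = i}"
  by (simp add: count_list_eq_length_filter length_filter_conv_card eq_commute)

lemma rowsum_nth: "i \<in> {1..n} \<Longrightarrow> rowsum n A ! (i - 1) = (\<Sum>j=1..n. A i j)"
  by (auto simp: rowsum_def nth_upt)

lemma colsum_nth: "j \<in> {1..n} \<Longrightarrow> colsum n A ! (j - 1) = (\<Sum>i=1..n. A i j)"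
  by (auto simp: colsum_def nth_upt)

lemma Wds_cont':
  assumes co: "colsum n A \<in> Lambda n r" and u: "u \<in> Wds n r A"
  shows "cont n u = rowsum n A"
proof (rule nth_equalityI)
  show "length (cont n u) = length (rowsum n A)" by (simp add: cont_def rowsum_def)
next
  fix k assume "k < length (cont n u)"
  hence i: "Suc k \<in> {1..n}" by (simp add: cont_def)
  let ?i = "Suc k"
  have uz: "u \<in> zwords n r" and uA: "\<forall>i\<in>{1..n}. \<forall>j\<in>{1..n}. A i j = card {k. k < r \<and> xi (colsum n A) ! k = j \<and> u ! k = i}"
    using u by (auto simp: Wds_def)
  have lu: "length u = r" using uz zwords_length by blast
  have "cont n u ! k = count_list u ?i" using cont_nth[OF i] by simp
  also have "\<dots> = card {k. k < r \<and> u ! k = ?i}" using lu by (simp add: count_card)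
  also have "{k. k < r \<and> u ! k = ?i} = (\<Union>j\<in>{1..n}. {k. k < r \<and> xi (colsum n A) ! k = j \<and> u ! k = ?i})"
  proof (intro set_eqI iffI)
    fix m assume m: "m \<in> {k. k < r \<and> u ! k = ?i}"
    hence "xi (colsum n A) ! m \<in> {1..n}" using xi_letter[OF co, of "Suc m"] by simp
    thus "m \<in> (\<Union>j\<in>{1..n}. {k. k < r \<and> xi (colsum n A) ! k = j \<and> u ! k = ?i})" using m by blast
  qed auto
  also have "card \<dots> = (\<Sum>j\<in>{1..n}. card {k. k < r \<and> xi (colsum n A) ! k = j \<and> u ! k = ?i})"
    by (rule card_UN_disjoint) auto
  also have "\<dots> = (\<Sum>j\<in>{1..n}. A ?i j)" using uA i by simp
  also have "\<dots> = rowsum n A ! k" using rowsum_nth[OF i] by simp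
  finally show "cont n u ! k = rowsum n A ! k" .
qed

lemma Wds_cont:
  assumes ro: "rowsum n A \<in> Lambda n r" and co: "colsum n A \<in> Lambda n r" and u: "u \<in> Wds n r A"
  shows "cont n u = rowsum n A"
  using Wds_cont'[OF co u] .

lemma rowsum_Lambda:
  assumes co: "colsum n A \<in> Lambda n r" and u: "u \<in> Wds n r A"
  shows "rowsum n A \<in> Lambda n r"
  using Wds_cont'[OF co u] cont_Lambda[of u n r] u by (simp add: Wds_def)

lemma Wds_dist:
  assumes ro: "rowsum n A \<in> Lambda n r" and co: "colsum n A \<in> Lambda n r" and u: "u \<in> Wds n r A"
  obtains y where "y permutes {1..r}" "wact r (xi (rowsum n A)) y = u" "winv u = pinv r y"
proof -
  let ?v = "xi (rowsum n A)"
  have v: "sorted ?v" "length ?v = r" using xi_Lambda[OF ro] by auto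
  have uz: "u \<in> zwords n r" using u by (simp add: Wds_def)
  have lu: "length u = r" using uz zwords_length by blast
  have "mset u = mset ?v" using mset_xi_cont[OF uz] Wds_cont[OF ro co u] by simp
  thus ?thesis using dist_exists[OF v lu] that by blast
qed

lemma PA_wA:
  assumes ro: "rowsum n A \<in> Lambda n r" and co: "colsum n A \<in> Lambda n r" and ne: "Wds n r A \<noteq> {}"
  shows "PA n r A (wA n r A)"
proof -
  obtain u where u: "u \<in> Wds n r A" using ne by blast
  obtain y where y: "y permutes {1..r}" "wact r (xi (rowsum n A)) y = u"
    using Wds_dist[OF ro co u] by metis
  have "PA n r A y" using PA_iff[OF ro co y(1)] y(2) u by simp
  thus ?thesis unfolding wA_PA by (rule someI[where P="PA n r A"])
qed

lemma young_id: "id \<in> young n r \<nu>"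
  by (simp add: young_def permutes_id)

lemma dA_in: "PA n r A (wA n r A) \<Longrightarrow> dA n r A \<in> dcoset n r A (wA n r A)"
proof -
  have e: "wA n r A = id \<circ> wA n r A \<circ> id" by simp
  have "\<exists>a b. wA n r A = a \<circ> wA n r A \<circ> b \<and> a \<in> young n r (rowsum n A) \<and> b \<in> young n r (colsum n A)"
    by (intro exI[of _ id] conjI e young_id)
  hence "wA n r A \<in> dcoset n r A (wA n r A)" by (simp only: dcoset_def mem_Collect_eq)
  thus ?thesis unfolding dA_def by (rule arg_min_natI[where P="\<lambda>x. x \<in> dcoset n r A (wA n r A)"])
qed

lemma dcoset_PA:
  assumes ro: "rowsum n A \<in> Lambda n r" and co: "colsum n A \<in> Lambda n r" and w: "PA n r A w"
  shows "dcoset n r A w = {x. PA n r A x}"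
proof (intro set_eqI iffI)
  fix x assume "x \<in> dcoset n r A w"
  thus "x \<in> {x. PA n r A x}" using PA_closed[OF w] by (auto simp: dcoset_def)
next
  fix x assume "x \<in> {x. PA n r A x}"
  thus "x \<in> dcoset n r A w" using G2[OF ro co _ w] by simp
qed

lemma dcoset_dA:
  assumes ro: "rowsum n A \<in> Lambda n r" and co: "colsum n A \<in> Lambda n r" and ne: "Wds n r A \<noteq> {}"
  shows "dcoset n r A (dA n r A) = {x. PA n r A x}"
proof -
  have w: "PA n r A (wA n r A)" using PA_wA[OF ro co ne] .
  have "dA n r A \<in> {x. PA n r A x}" using dA_in[OF w] dcoset_PA[OF ro co w] by simp
  thus ?thesis using dcoset_PA[OF ro co] by simp
qed

lemma GT:
  assumes ro: "rowsum n A \<in> Lambda n r" and co: "colsum n A \<in> Lambda n r" and ne: "Wds n r A \<noteq> {}"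
  shows "(\<lambda>u. \<Sum>x\<in>dcoset n r A (dA n r A). hperm n r (zbvec (xi (rowsum n A))) x u) =
         (\<lambda>u. if u \<in> Wds n r A then 1 else 0)"
proof (rule ext)
  fix u
  let ?v = "xi (rowsum n A)"
  let ?X = "{x. PA n r A x}"
  have v: "sorted ?v" "?v \<in> zwords n r" "length ?v = r" using xi_Lambda[OF ro] by auto
  have fin: "finite ?X"
    by (rule finite_subset[OF _ finite_permutations[of "{1..r}"]]) (auto simp: PA_def)
  have "(\<Sum>x\<in>dcoset n r A (dA n r A). hperm n r (zbvec ?v) x u) =
        (\<Sum>x\<in>?X. if winv (wact r ?v x) = pinv r x \<and> wact r ?v x = u then 1 else 0)"
    unfolding dcoset_dA[OF ro co ne]
  proof (rule sum.cong[OF refl])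
    fix x assume "x \<in> ?X"
    hence xp: "x permutes {1..r}" by (simp add: PA_def)
    have "hperm n r (zbvec ?v) x = (if winv (wact r ?v x) = pinv r x then zbvec (wact r ?v x) else (\<lambda>_. 0))"
      by (rule hperm_sorted[OF v(1,2) xp])
    thus "hperm n r (zbvec ?v) x u = (if winv (wact r ?v x) = pinv r x \<and> wact r ?v x = u then 1 else 0)"
      by (auto simp: zbvec_def)
  qed
  also have "\<dots> = of_nat (card {x\<in>?X. winv (wact r ?v x) = pinv r x \<and> wact r ?v x = u})"
    using fin by (simp add: sum.inter_filter[symmetric])
  also have "\<dots> = (if u \<in> Wds n r A then 1 else 0)"
  proof (cases "u \<in> Wds n r A")
    case True
    obtain y where y: "y permutes {1..r}" "wact r ?v y = u" "winv u = pinv r y"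
      using Wds_dist[OF ro co True] by metis
    have "{x\<in>?X. winv (wact r ?v x) = pinv r x \<and> wact r ?v x = u} = {y}"
    proof (intro set_eqI iffI)
      fix x assume "x \<in> {x\<in>?X. winv (wact r ?v x) = pinv r x \<and> wact r ?v x = u}"
      hence x: "x permutes {1..r}" "winv (wact r ?v x) = pinv r x" "wact r ?v x = u"
        by (auto simp: PA_def)
      have "x = y" using dist_unique[OF v(1,3) x(1) y(1)] x y by simp
      thus "x \<in> {y}" by simp
    next
      fix x assume "x \<in> {y}"
      hence "x = y" by simp
      moreover have "PA n r A y" using PA_iff[OF ro co y(1)] y(2) True by simp
      ultimately show "x \<in> {x\<in>?X. winv (wact r ?v x) = pinv r x \<and> wact r ?v x = u}" using y by simp
    qed
    thus ?thesis using True by simp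
  next
    case False
    have "{x\<in>?X. winv (wact r ?v x) = pinv r x \<and> wact r ?v x = u} = {}"
    proof (intro equals0I)
      fix x assume "x \<in> {x\<in>?X. winv (wact r ?v x) = pinv r x \<and> wact r ?v x = u}"
      hence "PA n r A x" "wact r ?v x = u" "x permutes {1..r}" by (auto simp: PA_def)
      thus False using PA_iff[OF ro co] False by simp
    qed
    thus ?thesis using False by (simp only: card.empty if_False of_nat_0)
  qed
  finally show "(\<Sum>x\<in>dcoset n r A (dA n r A). hperm n r (zbvec ?v) x u) = (if u \<in> Wds n r A then 1 else 0)" .
qed


definition locC :: "nat \<Rightarrow> nat \<Rightarrow> nat \<Rightarrow> zop \<Rightarrow> bool" where
  "locC n r a T \<longleftrightarrow> (\<forall>w\<in>zwords n r. \<forall>u\<in>zwords n r.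
     (if w ! a < w ! Suc a then T (swp a w) u else if w ! a = w ! Suc a then 0 else - T w u) =
     (if u ! Suc a < u ! a then T w (swp a u) - T w u else 0))"

lemma commC_locC: "(\<And>a. Suc a < r \<Longrightarrow> locC n r a T) \<Longrightarrow> commC n r T"
  by (simp add: commC_def locC_def)

definition twosite :: "(nat \<Rightarrow> nat \<Rightarrow> nat \<Rightarrow> nat \<Rightarrow> complex) \<Rightarrow> bool" where
  "twosite B \<longleftrightarrow> (\<forall>x y x' y'.
     (if x < y then B y x x' y' else if x = y then 0 else - B x y x' y') =
     (if y' < x' then B x y y' x' - B x y x' y' else 0))"

lemma locC_prod:
  assumes a: "Suc a < r" and tw: "twosite B"
    and Rinv: "\<And>w u. w \<in> zwords n r \<Longrightarrow> u \<in> zwords n r \<Longrightarrow> R (swp a w) u = R w u \<and> R w (swp a u) = R w u"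
    and T: "\<And>w u. w \<in> zwords n r \<Longrightarrow> u \<in> zwords n r \<Longrightarrow> T w u = B (w ! a) (w ! Suc a) (u ! a) (u ! Suc a) * R w u"
  shows "locC n r a T"
  unfolding locC_def
proof (intro ballI)
  fix w u assume w: "w \<in> zwords n r" and u: "u \<in> zwords n r"
  have lw: "length w = r" and lu: "length u = r" using w u zwords_length by blast+
  have sw: "swp a w \<in> zwords n r" and su: "swp a u \<in> zwords n r" using swp_zwords a w u by blast+
  have t1: "T (swp a w) u = B (w ! Suc a) (w ! a) (u ! a) (u ! Suc a) * R w u"
    using T[OF sw u] Rinv[OF w u] a lw by (simp add: swp_nth_a swp_nth_Sa)
  have t2: "T w (swp a u) = B (w ! a) (w ! Suc a) (u ! Suc a) (u ! a) * R w u"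
    using T[OF w su] Rinv[OF w u] a lu by (simp add: swp_nth_a swp_nth_Sa)
  have t3: "T w u = B (w ! a) (w ! Suc a) (u ! a) (u ! Suc a) * R w u" using T[OF w u] .
  have E: "(if w ! a < w ! Suc a then B (w ! Suc a) (w ! a) (u ! a) (u ! Suc a)
            else if w ! a = w ! Suc a then 0 else - B (w ! a) (w ! Suc a) (u ! a) (u ! Suc a)) =
           (if u ! Suc a < u ! a then B (w ! a) (w ! Suc a) (u ! Suc a) (u ! a) - B (w ! a) (w ! Suc a) (u ! a) (u ! Suc a) else 0)"
    using tw unfolding twosite_def by blast
  show "(if w ! a < w ! Suc a then T (swp a w) u else if w ! a = w ! Suc a then 0 else - T w u) =
        (if u ! Suc a < u ! a then T w (swp a u) - T w u else 0)"
    unfolding t1 t2 t3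
    by (cases "w ! a < w ! Suc a"; cases "w ! a = w ! Suc a"; cases "u ! Suc a < u ! a")
       (use E in \<open>simp_all add: left_diff_distrib\<close>)
qed

lemma locC_sum:
  assumes "\<And>j. j \<in> J \<Longrightarrow> locC n r a (T j)"
  shows "locC n r a (\<lambda>w u. \<Sum>j\<in>J. T j w u)"
  unfolding locC_def
proof (intro ballI)
  fix w u assume w: "w \<in> zwords n r" and u: "u \<in> zwords n r"
  have e: "\<And>j. j \<in> J \<Longrightarrow> (if w ! a < w ! Suc a then T j (swp a w) u else if w ! a = w ! Suc a then 0 else - T j w u) =
        (if u ! Suc a < u ! a then T j w (swp a u) - T j w u else 0)"
    using assms w u unfolding locC_def by blast
  show "(if w ! a < w ! Suc a then (\<Sum>j\<in>J. T j (swp a w) u) else if w ! a = w ! Suc a then 0 else - (\<Sum>j\<in>J. T j w u)) =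
        (if u ! Suc a < u ! a then (\<Sum>j\<in>J. T j w (swp a u)) - (\<Sum>j\<in>J. T j w u) else 0)"
  proof -
    have "(if w ! a < w ! Suc a then (\<Sum>j\<in>J. T j (swp a w) u) else if w ! a = w ! Suc a then 0 else - (\<Sum>j\<in>J. T j w u)) =
      (\<Sum>j\<in>J. (if w ! a < w ! Suc a then T j (swp a w) u else if w ! a = w ! Suc a then 0 else - T j w u))"
      by (simp add: sum_negf)
    also have "\<dots> = (\<Sum>j\<in>J. (if u ! Suc a < u ! a then T j w (swp a u) - T j w u else 0))"
      by (rule sum.cong[OF refl]) (rule e)
    also have "\<dots> = (if u ! Suc a < u ! a then (\<Sum>j\<in>J. T j w (swp a u)) - (\<Sum>j\<in>J. T j w u) else 0)"
      by (simp add: sum_subtractf)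
    finally show ?thesis .
  qed
qed

lemma locC_add:
  assumes "locC n r a T1" "locC n r a T2"
  shows "locC n r a (\<lambda>w u. T1 w u + T2 w u)"
proof -
  have "locC n r a (\<lambda>w u. \<Sum>j\<in>{True, False}. (if j then T1 else T2) w u)"
    by (rule locC_sum) (use assms in auto)
  thus ?thesis by simp
qed

lemma locC_cong:
  assumes a: "Suc a < r" and e: "\<And>w u. w \<in> zwords n r \<Longrightarrow> u \<in> zwords n r \<Longrightarrow> T w u = T' w u"
    and l: "locC n r a T"
  shows "locC n r a T'"
  unfolding locC_def
proof (intro ballI)
  fix w u assume w: "w \<in> zwords n r" and u: "u \<in> zwords n r"
  have sw: "swp a w \<in> zwords n r" and su: "swp a u \<in> zwords n r" using swp_zwords a w u by blast+
  show "(if w ! a < w ! Suc a then T' (swp a w) u else if w ! a = w ! Suc a then 0 else - T' w u) =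
        (if u ! Suc a < u ! a then T' w (swp a u) - T' w u else 0)"
    using l w u unfolding locC_def e[OF sw u, symmetric] e[OF w su, symmetric] e[OF w u, symmetric] by blast
qed

definition fam :: "(nat \<Rightarrow> nat \<Rightarrow> complex) \<Rightarrow> (nat \<Rightarrow> nat \<Rightarrow> complex) \<Rightarrow> (nat \<Rightarrow> nat \<Rightarrow> complex) \<Rightarrow> nat \<Rightarrow> nat \<Rightarrow> nat \<Rightarrow> nat \<Rightarrow> complex" where
  "fam L M Rt j = (\<lambda>p. if p < j then L else if p = j then M else Rt)"

lemma swp_other: "Suc a < length w \<Longrightarrow> p \<noteq> a \<Longrightarrow> p \<noteq> Suc a \<Longrightarrow> swp a w ! p = w ! p"
  by (simp add: swp_def nth_list_update)

lemma prod_split: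
  assumes a: "Suc a < r"
  shows "(\<Prod>p<r. f p) = f a * f (Suc a) * (\<Prod>p\<in>{..<r} - {a, Suc a}. f p)"
proof -
  have "{..<r} = insert a (insert (Suc a) ({..<r} - {a, Suc a}))" using a by auto
  hence "(\<Prod>p<r. f p) = (\<Prod>p\<in>insert a (insert (Suc a) ({..<r} - {a, Suc a})). f p)" by simp
  also have "\<dots> = f a * (f (Suc a) * (\<Prod>p\<in>{..<r} - {a, Suc a}. f p))" by simp
  finally show ?thesis by (simp add: mult.assoc)
qed

lemma sum_split:
  assumes a: "Suc a < r"
  shows "(\<Sum>p<r. f p) = (\<Sum>p\<in>{..<r} - {a, Suc a}. f p) + (f a + f (Suc a))"
proof -
  have "{..<r} = insert a (insert (Suc a) ({..<r} - {a, Suc a}))" using a by auto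
  hence "(\<Sum>p<r. f p) = (\<Sum>p\<in>insert a (insert (Suc a) ({..<r} - {a, Suc a})). f p)" by simp
  also have "\<dots> = f a + (f (Suc a) + (\<Sum>p\<in>{..<r} - {a, Suc a}. f p))" by simp
  finally show ?thesis by (simp add: add_ac)
qed

definition Rrest :: "nat \<Rightarrow> nat \<Rightarrow> nat \<Rightarrow> nat list \<Rightarrow> (nat \<Rightarrow> nat \<Rightarrow> nat \<Rightarrow> complex) \<Rightarrow> zop" where
  "Rrest n r a l ops w u = (if cont n w = l then 1 else 0) * (\<Prod>p\<in>{..<r} - {a, Suc a}. ops p (w ! p) (u ! p))"

lemma Rrest_inv:
  assumes a: "Suc a < r" and w: "w \<in> zwords n r" and u: "u \<in> zwords n r"
  shows "Rrest n r a l ops (swp a w) u = Rrest n r a l ops w u \<and> Rrest n r a l ops w (swp a u) = Rrest n r a l ops w u"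
proof -
  have lw: "length w = r" and lu: "length u = r" using w u zwords_length by blast+
  have c: "cont n (swp a w) = cont n w" using cont_swp a lw by simp
  have p1: "(\<Prod>p\<in>{..<r} - {a, Suc a}. ops p (swp a w ! p) (u ! p)) = (\<Prod>p\<in>{..<r} - {a, Suc a}. ops p (w ! p) (u ! p))"
    by (rule prod.cong[OF refl]) (use a lw in \<open>auto simp: swp_other\<close>)
  have p2: "(\<Prod>p\<in>{..<r} - {a, Suc a}. ops p (w ! p) (swp a u ! p)) = (\<Prod>p\<in>{..<r} - {a, Suc a}. ops p (w ! p) (u ! p))"
    by (rule prod.cong[OF refl]) (use a lu in \<open>auto simp: swp_other\<close>)
  show ?thesis using c p1 p2 by (simp add: Rrest_def)
qed

lemma FAM:
  assumes tL: "twosite (\<lambda>x y x' y'. L x x' * L y y')" and tR: "twosite (\<lambda>x y x' y'. Rt x x' * Rt y y')"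
    and tM: "twosite (\<lambda>x y x' y'. M x x' * Rt y y' + L x x' * M y y')"
  shows "commC n r (\<lambda>w u. if cont n w = l then (\<Sum>j<r. tensor_op n r (fam L M Rt j) w u) else 0)"
proof (rule commC_locC)
  fix a assume a: "Suc a < r"
  let ?P = "{..<r} - {a, Suc a}"
  define BB where "BB j = (if j < a then (\<lambda>x y x' y'. Rt x x' * Rt y y') else (\<lambda>x y x' y'. L x x' * L y y'))" for j
  define Bm where "Bm = (\<lambda>x y x' y'. M x x' * Rt y y' + L x x' * M y y')"
  let ?T' = "\<lambda>w u. (\<Sum>j\<in>?P. BB j (w ! a) (w ! Suc a) (u ! a) (u ! Suc a) * Rrest n r a l (fam L M Rt j) w u) +
      Bm (w ! a) (w ! Suc a) (u ! a) (u ! Suc a) * Rrest n r a l (fam L M Rt a) w u"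
  have l1: "locC n r a (\<lambda>w u. \<Sum>j\<in>?P. BB j (w ! a) (w ! Suc a) (u ! a) (u ! Suc a) * Rrest n r a l (fam L M Rt j) w u)"
  proof (rule locC_sum)
    fix j assume "j \<in> ?P"
    have tw: "twosite (BB j)" using tL tR by (simp add: BB_def)
    show "locC n r a (\<lambda>w u. BB j (w ! a) (w ! Suc a) (u ! a) (u ! Suc a) * Rrest n r a l (fam L M Rt j) w u)"
      by (rule locC_prod[where B="BB j" and R="Rrest n r a l (fam L M Rt j)"]) (simp_all add: a tw Rrest_inv[OF a])
  qed
  have l2: "locC n r a (\<lambda>w u. Bm (w ! a) (w ! Suc a) (u ! a) (u ! Suc a) * Rrest n r a l (fam L M Rt a) w u)"
    by (rule locC_prod[where B="Bm" and R="Rrest n r a l (fam L M Rt a)"]) (simp_all add: a Rrest_inv[OF a] tM[folded Bm_def])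
  have l3: "locC n r a ?T'" using locC_add[OF l1 l2] .
  show "locC n r a (\<lambda>w u. if cont n w = l then (\<Sum>j<r. tensor_op n r (fam L M Rt j) w u) else 0)"
  proof (rule locC_cong[OF a _ l3])
    fix w u assume w: "w \<in> zwords n r" and u: "u \<in> zwords n r"
    have tj: "tensor_op n r (fam L M Rt j) w u = fam L M Rt j a (w ! a) (u ! a) * fam L M Rt j (Suc a) (w ! Suc a) (u ! Suc a) *
        (\<Prod>p\<in>?P. fam L M Rt j p (w ! p) (u ! p))" for j
      using w u prod_split[OF a] by (simp add: tensor_op_def)
    have jP: "fam L M Rt j a (w ! a) (u ! a) * fam L M Rt j (Suc a) (w ! Suc a) (u ! Suc a) = BB j (w ! a) (w ! Suc a) (u ! a) (u ! Suc a)"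
      if "j \<in> ?P" for j using that by (auto simp: fam_def BB_def)
    have restS: "(\<Prod>p\<in>?P. fam L M Rt (Suc a) p (w ! p) (u ! p)) = (\<Prod>p\<in>?P. fam L M Rt a p (w ! p) (u ! p))"
      by (rule prod.cong[OF refl]) (auto simp: fam_def)
    have mid: "tensor_op n r (fam L M Rt a) w u + tensor_op n r (fam L M Rt (Suc a)) w u =
        Bm (w ! a) (w ! Suc a) (u ! a) (u ! Suc a) * (\<Prod>p\<in>?P. fam L M Rt a p (w ! p) (u ! p))"
      unfolding tj restS by (simp add: fam_def Bm_def algebra_simps)
    have "(\<Sum>j<r. tensor_op n r (fam L M Rt j) w u) =
        (\<Sum>j\<in>?P. tensor_op n r (fam L M Rt j) w u) + (tensor_op n r (fam L M Rt a) w u + tensor_op n r (fam L M Rt (Suc a)) w u)"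
      by (rule sum_split[OF a])
    also have "(\<Sum>j\<in>?P. tensor_op n r (fam L M Rt j) w u) =
        (\<Sum>j\<in>?P. BB j (w ! a) (w ! Suc a) (u ! a) (u ! Suc a) * (\<Prod>p\<in>?P. fam L M Rt j p (w ! p) (u ! p)))"
      by (rule sum.cong[OF refl]) (simp add: tj jP)
    finally have "(\<Sum>j<r. tensor_op n r (fam L M Rt j) w u) =
        (\<Sum>j\<in>?P. BB j (w ! a) (w ! Suc a) (u ! a) (u ! Suc a) * (\<Prod>p\<in>?P. fam L M Rt j p (w ! p) (u ! p))) +
        Bm (w ! a) (w ! Suc a) (u ! a) (u ! Suc a) * (\<Prod>p\<in>?P. fam L M Rt a p (w ! p) (u ! p))"
      using mid by simp
    thus "?T' w u = (if cont n w = l then (\<Sum>j<r. tensor_op n r (fam L M Rt j) w u) else 0)"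
      by (simp add: Rrest_def sum_distrib_left sum_distrib_right mult_ac)
  qed
qed

lemma CONST:
  assumes tG: "twosite (\<lambda>x y x' y'. G x x' * G y y')"
  shows "commC n r (\<lambda>w u. if cont n w = l then tensor_op n r (\<lambda>p. G) w u else 0)"
proof (rule commC_locC)
  fix a assume a: "Suc a < r"
  have l: "locC n r a (\<lambda>w u. (G (w ! a) (u ! a) * G (w ! Suc a) (u ! Suc a)) * Rrest n r a l (\<lambda>p. G) w u)"
    by (rule locC_prod[where B="\<lambda>x y x' y'. G x x' * G y y'" and R="Rrest n r a l (\<lambda>p. G)"])
       (simp_all add: a tG Rrest_inv[OF a])
  show "locC n r a (\<lambda>w u. if cont n w = l then tensor_op n r (\<lambda>p. G) w u else 0)"
  proof (rule locC_cong[OF a _ l])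
    fix w u assume w: "w \<in> zwords n r" and u: "u \<in> zwords n r"
    show "G (w ! a) (u ! a) * G (w ! Suc a) (u ! Suc a) * Rrest n r a l (\<lambda>p. G) w u =
          (if cont n w = l then tensor_op n r (\<lambda>p. G) w u else 0)"
      using w u prod_split[OF a, of "\<lambda>p. G (w ! p) (u ! p)"] by (simp add: tensor_op_def Rrest_def)
  qed
qed


lemma vunit_ap: "vunit a m = (if m = a then 1 else 0)" by (simp add: vunit_def)
lemma matE_ap: "matE a b k m = (if k = b \<and> m = a then 1 else 0)" by (simp add: matE_def vunit_def)
lemma matK_ap: "matK i k m = (if k \<noteq> i \<and> m = k then 1 else 0)" by (simp add: matK_def vunit_def)

lemma tw_id: "twosite (\<lambda>x y x' y'. vunit x x' * vunit y y')"
  unfolding twosite_def vunit_ap by auto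
lemma tw_K: "twosite (\<lambda>x y x' y'. matK c x x' * matK c y y')"
  unfolding twosite_def matK_ap by auto
lemma tw_E: "twosite (\<lambda>x y x' y'. matE i (Suc i) x x' * matK i y y' + vunit x x' * matE i (Suc i) y y')"
  unfolding twosite_def matK_ap matE_ap vunit_ap by auto
lemma tw_F: "twosite (\<lambda>x y x' y'. matE (Suc i) i x x' * vunit y y' + matK (Suc i) x x' * matE (Suc i) i y y')"
  unfolding twosite_def matK_ap matE_ap vunit_ap by auto

definition Asc :: "nat list \<Rightarrow> nat \<Rightarrow> nat \<Rightarrow> nat \<Rightarrow> nat \<Rightarrow> nat" where
  "Asc l b c = (\<lambda>a b'. diagm l a b' - unitm b b a b' + unitm c b a b')"

lemma Asc_val:
  assumes L: "l \<in> Lambda n r" and bc: "b \<noteq> c" and a: "a \<in> {1..n}" and b': "b' \<in> {1..n}"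
  shows "Asc l b c a b' = (if a = b' then l ! (a - 1) - (if a = b then 1 else 0) else 0) + (if a = c \<and> b' = b then 1 else 0)"
  using L bc a b' by (auto simp: Asc_def diagm_def unitm_def Lambda_def)

lemma card_ne0: "finite S \<Longrightarrow> k \<in> S \<Longrightarrow> card S \<noteq> 0"
  by auto

lemma count_xi_card: assumes L: "l \<in> Lambda n r" and j: "j \<in> {1..n}"
  shows "card {k. k < r \<and> xi l ! k = j} = l ! (j - 1)"
  using count_card[of "xi l" j] count_xi[OF L, of j] xi_Lambda(3)[OF L] j by simp

lemma colsum_Asc:
  assumes L: "l \<in> Lambda n r" and bc: "b \<noteq> c" and b: "b \<in> {1..n}" and c: "c \<in> {1..n}" and lb: "1 \<le> l ! (b - 1)"
  shows "colsum n (Asc l b c) = l"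
proof (rule nth_equalityI)
  show "length (colsum n (Asc l b c)) = length l" using L by (simp add: colsum_def Lambda_def)
next
  fix k assume "k < length (colsum n (Asc l b c))"
  hence k: "Suc k \<in> {1..n}" by (simp add: colsum_def)
  have "colsum n (Asc l b c) ! k = (\<Sum>a=1..n. Asc l b c a (Suc k))" using colsum_nth[OF k] by simp
  also have "\<dots> = (\<Sum>a=1..n. (if a = Suc k then l ! (a - 1) - (if a = b then 1 else 0) else 0) + (if a = c \<and> Suc k = b then 1 else 0))"
    by (rule sum.cong[OF refl]) (use Asc_val[OF L bc _ k] in simp)
  also have "\<dots> = (l ! k - (if Suc k = b then 1 else 0)) + (if Suc k = b then 1 else 0)"
    using k c by (simp add: sum.distrib)
  also have "\<dots> = l ! k" using lb by auto
  finally show "colsum n (Asc l b c) ! k = l ! k" .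
qed

lemma Wds_Asc:
  assumes L: "l \<in> Lambda n r" and bc: "b \<noteq> c" and b: "b \<in> {1..n}" and c: "c \<in> {1..n}" and lb: "1 \<le> l ! (b - 1)"
  shows "Wds n r (Asc l b c) = {u. \<exists>j<r. xi l ! j = b \<and> u = (xi l)[j := c]}"
proof (intro set_eqI iffI)
  let ?A = "Asc l b c" and ?x = "xi l"
  have cs: "colsum n ?A = l" using colsum_Asc[OF L bc b c lb] .
  have xz: "?x \<in> zwords n r" and lx: "length ?x = r" using xi_Lambda[OF L] by auto
  fix u
  {
    assume u: "u \<in> Wds n r ?A"
    have uz: "u \<in> zwords n r" and H: "\<And>i' j'. i' \<in> {1..n} \<Longrightarrow> j' \<in> {1..n} \<Longrightarrow> ?A i' j' = card {k. k < r \<and> ?x ! k = j' \<and> u ! k = i'}"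
      using u cs by (auto simp: Wds_def)
    have lu: "length u = r" using uz zwords_length by blast
    have fin: "finite {k. k < r \<and> ?x ! k = j' \<and> u ! k = i'}" for i' j' by simp
    have s1: "u ! k = ?x ! k" if k: "k < r" "?x ! k \<noteq> b" for k
    proof (rule ccontr)
      assume ne: "u ! k \<noteq> ?x ! k"
      have i': "u ! k \<in> {1..n}" and j': "?x ! k \<in> {1..n}" using zwords_nth uz xz k by blast+
      have c1: "card {k'. k' < r \<and> ?x ! k' = ?x ! k \<and> u ! k' = u ! k} \<noteq> 0" using card_ne0[OF fin] k by blast
      have c2: "?A (u ! k) (?x ! k) = 0" using Asc_val[OF L bc i' j'] ne k by auto
      show False using c1 c2 H[OF i' j'] by linarith
    qed
    have "card {k. k < r \<and> ?x ! k = b \<and> u ! k = c} = 1" using H[OF c b] Asc_val[OF L bc c b] bc by simp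
    then obtain j where j: "{k. k < r \<and> ?x ! k = b \<and> u ! k = c} = {j}" using card_1_singletonE by blast
    hence jr: "j < r" "?x ! j = b" "u ! j = c" by auto
    have s3: "u ! k = b" if k: "k < r" "?x ! k = b" "k \<noteq> j" for k
    proof (rule ccontr)
      assume ne: "u ! k \<noteq> b"
      have i': "u ! k \<in> {1..n}" using zwords_nth uz k by blast
      show False
      proof (cases "u ! k = c")
        case True
        hence "k \<in> {k. k < r \<and> ?x ! k = b \<and> u ! k = c}" using k by simp
        thus False using j k by blast
      next
        case False
        have c1: "card {k'. k' < r \<and> ?x ! k' = b \<and> u ! k' = u ! k} \<noteq> 0" using card_ne0[OF fin] k by blast
        have c2: "?A (u ! k) b = 0" using Asc_val[OF L bc i' b] ne False by auto
        show False using c1 c2 H[OF i' b] by linarith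
      qed
    qed
    have "u = ?x[j := c]"
    proof (rule nth_equalityI)
      show "length u = length (?x[j := c])" using lu lx by simp
      fix k assume "k < length u"
      hence k: "k < r" using lu by simp
      show "u ! k = ?x[j := c] ! k"
      proof (cases "k = j")
        case True thus ?thesis using jr lx by simp
      next
        case False
        thus ?thesis using s1[OF k] s3[OF k] by (cases "?x ! k = b") auto
      qed
    qed
    thus "u \<in> {u. \<exists>j<r. ?x ! j = b \<and> u = ?x[j := c]}" using jr by blast
  next
    assume "u \<in> {u. \<exists>j<r. ?x ! j = b \<and> u = ?x[j := c]}"
    then obtain j where j: "j < r" "?x ! j = b" and ue: "u = ?x[j := c]" by blast
    have uz: "u \<in> zwords n r" using xz c lx j unfolding ue zwords_def by (auto dest: set_update_subset_insert[THEN subsetD])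
    have "?A i' j' = card {k. k < r \<and> ?x ! k = j' \<and> u ! k = i'}" if ij: "i' \<in> {1..n}" "j' \<in> {1..n}" for i' j'
    proof (cases "i' = j'")
      case True
      have "{k. k < r \<and> ?x ! k = j' \<and> u ! k = i'} = {k. k < r \<and> ?x ! k = j'} - (if j' = b then {j} else {})"
        using True j bc lx by (auto simp: ue nth_list_update)
      moreover have "card ({k. k < r \<and> ?x ! k = j'} - (if j' = b then {j} else {})) = l ! (j' - 1) - (if j' = b then 1 else 0)"
        using count_xi_card[OF L ij(2)] j by (auto simp: card_Diff_singleton)
      ultimately show ?thesis using Asc_val[OF L bc ij] True bc by auto
    next
      case False
      have "{k. k < r \<and> ?x ! k = j' \<and> u ! k = i'} = (if j' = b \<and> i' = c then {j} else {})"
        using False j lx by (auto simp: ue nth_list_update)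
      thus ?thesis using Asc_val[OF L bc ij] False by auto
    qed
    thus "u \<in> Wds n r ?A" using uz cs by (simp add: Wds_def)
  }
qed

lemma Wds_Asc_ne:
  assumes L: "l \<in> Lambda n r" and bc: "b \<noteq> c" and b: "b \<in> {1..n}" and c: "c \<in> {1..n}" and lb: "1 \<le> l ! (b - 1)"
  shows "Wds n r (Asc l b c) \<noteq> {}"
proof -
  have "card {k. k < r \<and> xi l ! k = b} \<noteq> 0" using count_xi_card[OF L b] lb by simp
  then obtain j where "j < r" "xi l ! j = b" by (metis (mono_tags, lifting) Collect_empty_eq card.empty)
  thus ?thesis unfolding Wds_Asc[OF L bc b c lb] by blast
qed

lemma diagm_val: assumes L: "\<mu> \<in> Lambda n r" and a: "a \<in> {1..n}"
  shows "diagm \<mu> a b' = (if a = b' then \<mu> ! (a - 1) else 0)"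
  using L a by (auto simp: diagm_def Lambda_def)

lemma colsum_diag: assumes L: "\<mu> \<in> Lambda n r" shows "colsum n (diagm \<mu>) = \<mu>"
proof (rule nth_equalityI)
  show "length (colsum n (diagm \<mu>)) = length \<mu>" using L by (simp add: colsum_def Lambda_def)
next
  fix k assume "k < length (colsum n (diagm \<mu>))"
  hence k: "Suc k \<in> {1..n}" by (simp add: colsum_def)
  have "colsum n (diagm \<mu>) ! k = (\<Sum>a=1..n. diagm \<mu> a (Suc k))" using colsum_nth[OF k] by simp
  also have "\<dots> = (\<Sum>a=1..n. if a = Suc k then \<mu> ! (a - 1) else 0)"
    by (rule sum.cong[OF refl]) (use diagm_val[OF L] in simp)
  also have "\<dots> = \<mu> ! k" using k by simp
  finally show "colsum n (diagm \<mu>) ! k = \<mu> ! k" .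
qed

lemma Wds_diag: assumes L: "\<mu> \<in> Lambda n r" shows "Wds n r (diagm \<mu>) = {xi \<mu>}"
proof (intro set_eqI iffI)
  let ?x = "xi \<mu>"
  have cs: "colsum n (diagm \<mu>) = \<mu>" using colsum_diag[OF L] .
  have xz: "?x \<in> zwords n r" and lx: "length ?x = r" using xi_Lambda[OF L] by auto
  fix u
  {
    assume u: "u \<in> Wds n r (diagm \<mu>)"
    have uz: "u \<in> zwords n r" and H: "\<And>i' j'. i' \<in> {1..n} \<Longrightarrow> j' \<in> {1..n} \<Longrightarrow> diagm \<mu> i' j' = card {k. k < r \<and> ?x ! k = j' \<and> u ! k = i'}"
      using u cs by (auto simp: Wds_def)
    have lu: "length u = r" using uz zwords_length by blast
    have fin: "finite {k. k < r \<and> ?x ! k = j' \<and> u ! k = i'}" for i' j' by simp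
    have "u = ?x"
    proof (rule nth_equalityI)
      show "length u = length ?x" using lu lx by simp
      fix k assume "k < length u"
      hence k: "k < r" using lu by simp
      show "u ! k = ?x ! k"
      proof (rule ccontr)
        assume ne: "u ! k \<noteq> ?x ! k"
        have i': "u ! k \<in> {1..n}" and j': "?x ! k \<in> {1..n}" using zwords_nth uz xz k by blast+
        have c1: "card {k'. k' < r \<and> ?x ! k' = ?x ! k \<and> u ! k' = u ! k} \<noteq> 0" using card_ne0[OF fin] k by blast
        have c2: "diagm \<mu> (u ! k) (?x ! k) = 0" using diagm_val[OF L i'] ne by simp
        show False using c1 c2 H[OF i' j'] by linarith
      qed
    qed
    thus "u \<in> {?x}" by simp
  next
    assume "u \<in> {?x}"
    hence ue: "u = ?x" by simp
    have "diagm \<mu> i' j' = card {k. k < r \<and> ?x ! k = j' \<and> u ! k = i'}" if ij: "i' \<in> {1..n}" "j' \<in> {1..n}" for i' j'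
    proof (cases "i' = j'")
      case True
      thus ?thesis using count_xi_card[OF L ij(2)] diagm_val[OF L ij(1)] ue by simp
    next
      case False
      hence "{k. k < r \<and> ?x ! k = j' \<and> u ! k = i'} = {}" using ue by auto
      thus ?thesis using diagm_val[OF L ij(1)] False by simp
    qed
    thus "u \<in> Wds n r (diagm \<mu>)" using xz ue cs by (simp add: Wds_def)
  }
qed


lemma prod_ind: "(\<Prod>p<(r::nat). (if Q p then 1 else 0)) = (if \<forall>p<r. Q p then 1 else (0::complex))"
proof (cases "\<forall>p<r. Q p")
  case True thus ?thesis by simp
next
  case False
  then obtain p where p: "p < r" "\<not> Q p" by blast
  have "(\<Prod>p<r. (if Q p then 1 else 0::complex)) = 0"
    by (subst prod_zero_iff) (use p in auto)
  thus ?thesis using False by simp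
qed

lemma sum_unique: assumes "\<And>j j'. j < r \<Longrightarrow> j' < r \<Longrightarrow> C j \<Longrightarrow> C j' \<Longrightarrow> j = j'"
  shows "(\<Sum>j<(r::nat). (if C j then 1 else 0::complex)) = (if \<exists>j<r. C j then 1 else 0)"
proof (cases "\<exists>j<r. C j")
  case True
  then obtain j0 where j0: "j0 < r" "C j0" by blast
  have "(\<Sum>j<r. (if C j then 1 else 0::complex)) = (\<Sum>j<r. (if j = j0 then 1 else 0))"
    by (rule sum.cong[OF refl]) (use assms j0 in auto)
  also have "\<dots> = 1" using j0 by simp
  finally show ?thesis using True by simp
next
  case False thus ?thesis by simp
qed

lemma finite_Lambda: "finite (Lambda n r)"
proof (rule finite_subset[OF _ finite_lists_length_eq[of "{0..r}" n]])
  show "Lambda n r \<subseteq> {xs. set xs \<subseteq> {0..r} \<and> length xs = n}"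
    by (auto simp: Lambda_def member_le_sum_list)
qed simp

lemma psi_e_fam: "psi_e n r i = (\<lambda>w u. \<Sum>j<r. tensor_op n r (fam vunit (matE i (Suc i)) (matK i) j) w u)"
  unfolding psi_e_def fam_def Suc_eq_plus1 by (rule refl)

lemma psi_f_fam: "psi_f n r i = (\<lambda>w u. \<Sum>j<r. tensor_op n r (fam (matK (Suc i)) (matE (Suc i) i) vunit j) w u)"
  unfolding psi_f_def fam_def Suc_eq_plus1 by (rule refl)

lemma tensor_supp: "supp n r (\<lambda>w u. if cont n w = l then (\<Sum>j<r. tensor_op n r (ops j) w u) else 0)"
  by (auto simp: supp_def tensor_op_def)

lemma tensor_supp1: "supp n r (\<lambda>w u. if cont n w = l then tensor_op n r ops w u else 0)"
  by (auto simp: supp_def tensor_op_def)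

lemma eval_e:
  assumes L: "l \<in> Lambda n r" and i: "i \<in> {1..<n}"
  shows "psi_e n r i (xi l) u = (if \<exists>j<r. xi l ! j = Suc i \<and> u = (xi l)[j := i] then 1 else 0)"
proof -
  let ?x = "xi l"
  have xz: "?x \<in> zwords n r" and sx: "sorted ?x" and lx: "length ?x = r" using xi_Lambda[OF L] by auto
  show ?thesis
  proof (cases "u \<in> zwords n r")
    case False
    have "\<not> (\<exists>j<r. ?x ! j = Suc i \<and> u = ?x[j := i])"
    proof
      assume "\<exists>j<r. ?x ! j = Suc i \<and> u = ?x[j := i]"
      then obtain j where "j < r" "u = ?x[j := i]" by blast
      hence "u \<in> zwords n r" using xz i lx unfolding zwords_def by (auto dest: set_update_subset_insert[THEN subsetD])
      thus False using False by simp
    qed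
    thus ?thesis using False by (simp add: psi_e_def tensor_op_def)
  next
    case True
    have lu: "length u = r" using True zwords_length by blast
    have tm: "tensor_op n r (fam vunit (matE i (Suc i)) (matK i) j) ?x u =
       (if ?x ! j = Suc i \<and> u = ?x[j := i] then 1 else 0)" if j: "j < r" for j
    proof -
      have "tensor_op n r (fam vunit (matE i (Suc i)) (matK i) j) ?x u =
        (\<Prod>p<r. fam vunit (matE i (Suc i)) (matK i) j p (?x ! p) (u ! p))"
        using xz True by (simp add: tensor_op_def)
      also have "\<dots> = (\<Prod>p<r. (if (if p < j then u ! p = ?x ! p else if p = j then ?x ! p = Suc i \<and> u ! p = i
           else ?x ! p \<noteq> i \<and> u ! p = ?x ! p) then 1 else 0))"
        by (rule prod.cong[OF refl]) (auto simp: fam_def vunit_ap matE_ap matK_ap)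
      also have "\<dots> = (if \<forall>p<r. (if p < j then u ! p = ?x ! p else if p = j then ?x ! p = Suc i \<and> u ! p = i
           else ?x ! p \<noteq> i \<and> u ! p = ?x ! p) then 1 else 0)" by (rule prod_ind)
      also have "(\<forall>p<r. (if p < j then u ! p = ?x ! p else if p = j then ?x ! p = Suc i \<and> u ! p = i
           else ?x ! p \<noteq> i \<and> u ! p = ?x ! p)) \<longleftrightarrow> ?x ! j = Suc i \<and> u = ?x[j := i]"
      proof
        assume h: "\<forall>p<r. (if p < j then u ! p = ?x ! p else if p = j then ?x ! p = Suc i \<and> u ! p = i
           else ?x ! p \<noteq> i \<and> u ! p = ?x ! p)"
        have "u = ?x[j := i]"
        proof (rule nth_equalityI)
          show "length u = length (?x[j := i])" using lu lx by simp
          fix p assume "p < length u"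
          hence p: "p < r" using lu by simp
          show "u ! p = ?x[j := i] ! p" using h[rule_format, OF p] lx p by (auto split: if_splits)
        qed
        thus "?x ! j = Suc i \<and> u = ?x[j := i]" using h j by auto
      next
        assume h: "?x ! j = Suc i \<and> u = ?x[j := i]"
        show "\<forall>p<r. (if p < j then u ! p = ?x ! p else if p = j then ?x ! p = Suc i \<and> u ! p = i
           else ?x ! p \<noteq> i \<and> u ! p = ?x ! p)"
        proof (intro allI impI)
          fix p assume p: "p < r"
          have "j < p \<Longrightarrow> ?x ! j \<le> ?x ! p" using sorted_nth_mono[OF sx, of j p] p lx by simp
          thus "(if p < j then u ! p = ?x ! p else if p = j then ?x ! p = Suc i \<and> u ! p = i
           else ?x ! p \<noteq> i \<and> u ! p = ?x ! p)" using h p j lx by auto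
        qed
      qed
      finally show ?thesis .
    qed
    have "psi_e n r i ?x u = (\<Sum>j<r. (if ?x ! j = Suc i \<and> u = ?x[j := i] then 1 else 0))"
      unfolding psi_e_fam by (rule sum.cong[OF refl]) (simp add: tm)
    also have "\<dots> = (if \<exists>j<r. ?x ! j = Suc i \<and> u = ?x[j := i] then 1 else 0)"
    proof (rule sum_unique)
      fix j j' assume jj: "j < r" "j' < r" and h: "?x ! j = Suc i \<and> u = ?x[j := i]" "?x ! j' = Suc i \<and> u = ?x[j' := i]"
      show "j = j'"
      proof (rule ccontr)
        assume "j \<noteq> j'"
        hence "u ! j = ?x ! j" using h(2) by simp
        moreover have "u ! j = i" using h(1) jj lx by simp
        ultimately show False using h(1) by simp
      qed
    qed
    finally show ?thesis .
  qed
qed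

lemma eval_f:
  assumes L: "l \<in> Lambda n r" and i: "i \<in> {1..<n}"
  shows "psi_f n r i (xi l) u = (if \<exists>j<r. xi l ! j = i \<and> u = (xi l)[j := Suc i] then 1 else 0)"
proof -
  let ?x = "xi l"
  have xz: "?x \<in> zwords n r" and sx: "sorted ?x" and lx: "length ?x = r" using xi_Lambda[OF L] by auto
  show ?thesis
  proof (cases "u \<in> zwords n r")
    case False
    have "\<not> (\<exists>j<r. ?x ! j = i \<and> u = ?x[j := Suc i])"
    proof
      assume "\<exists>j<r. ?x ! j = i \<and> u = ?x[j := Suc i]"
      then obtain j where "j < r" "u = ?x[j := Suc i]" by blast
      hence "u \<in> zwords n r" using xz i lx unfolding zwords_def by (auto dest: set_update_subset_insert[THEN subsetD])
      thus False using False by simp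
    qed
    thus ?thesis using False by (simp add: psi_f_def tensor_op_def)
  next
    case True
    have lu: "length u = r" using True zwords_length by blast
    have tm: "tensor_op n r (fam (matK (Suc i)) (matE (Suc i) i) vunit j) ?x u =
       (if ?x ! j = i \<and> u = ?x[j := Suc i] then 1 else 0)" if j: "j < r" for j
    proof -
      have "tensor_op n r (fam (matK (Suc i)) (matE (Suc i) i) vunit j) ?x u =
        (\<Prod>p<r. fam (matK (Suc i)) (matE (Suc i) i) vunit j p (?x ! p) (u ! p))"
        using xz True by (simp add: tensor_op_def)
      also have "\<dots> = (\<Prod>p<r. (if (if p < j then ?x ! p \<noteq> Suc i \<and> u ! p = ?x ! p else if p = j then ?x ! p = i \<and> u ! p = Suc i
           else u ! p = ?x ! p) then 1 else 0))"
        by (rule prod.cong[OF refl]) (auto simp: fam_def vunit_ap matE_ap matK_ap)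
      also have "\<dots> = (if \<forall>p<r. (if p < j then ?x ! p \<noteq> Suc i \<and> u ! p = ?x ! p else if p = j then ?x ! p = i \<and> u ! p = Suc i
           else u ! p = ?x ! p) then 1 else 0)" by (rule prod_ind)
      also have "(\<forall>p<r. (if p < j then ?x ! p \<noteq> Suc i \<and> u ! p = ?x ! p else if p = j then ?x ! p = i \<and> u ! p = Suc i
           else u ! p = ?x ! p)) \<longleftrightarrow> ?x ! j = i \<and> u = ?x[j := Suc i]"
      proof
        assume h: "\<forall>p<r. (if p < j then ?x ! p \<noteq> Suc i \<and> u ! p = ?x ! p else if p = j then ?x ! p = i \<and> u ! p = Suc i
           else u ! p = ?x ! p)"
        have "u = ?x[j := Suc i]"
        proof (rule nth_equalityI)
          show "length u = length (?x[j := Suc i])" using lu lx by simp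
          fix p assume "p < length u"
          hence p: "p < r" using lu by simp
          show "u ! p = ?x[j := Suc i] ! p" using h[rule_format, OF p] lx p by (auto split: if_splits)
        qed
        thus "?x ! j = i \<and> u = ?x[j := Suc i]" using h j by auto
      next
        assume h: "?x ! j = i \<and> u = ?x[j := Suc i]"
        show "\<forall>p<r. (if p < j then ?x ! p \<noteq> Suc i \<and> u ! p = ?x ! p else if p = j then ?x ! p = i \<and> u ! p = Suc i
           else u ! p = ?x ! p)"
        proof (intro allI impI)
          fix p assume p: "p < r"
          have "p < j \<Longrightarrow> ?x ! p \<le> ?x ! j" using sorted_nth_mono[OF sx, of p j] j lx by simp
          thus "(if p < j then ?x ! p \<noteq> Suc i \<and> u ! p = ?x ! p else if p = j then ?x ! p = i \<and> u ! p = Suc i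
           else u ! p = ?x ! p)" using h p j lx by auto
        qed
      qed
      finally show ?thesis .
    qed
    have "psi_f n r i ?x u = (\<Sum>j<r. (if ?x ! j = i \<and> u = ?x[j := Suc i] then 1 else 0))"
      unfolding psi_f_fam by (rule sum.cong[OF refl]) (simp add: tm)
    also have "\<dots> = (if \<exists>j<r. ?x ! j = i \<and> u = ?x[j := Suc i] then 1 else 0)"
    proof (rule sum_unique)
      fix j j' assume jj: "j < r" "j' < r" and h: "?x ! j = i \<and> u = ?x[j := Suc i]" "?x ! j' = i \<and> u = ?x[j' := Suc i]"
      show "j = j'"
      proof (rule ccontr)
        assume "j \<noteq> j'"
        hence "u ! j = ?x ! j" using h(2) by simp
        moreover have "u ! j = Suc i" using h(1) jj lx by simp
        ultimately show False using h(1) by simp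
      qed
    qed
    finally show ?thesis .
  qed
qed

lemma eval_id:
  assumes L: "\<mu> \<in> Lambda n r"
  shows "tensor_op n r (\<lambda>p. vunit) (xi \<mu>) u = (if u = xi \<mu> then 1 else 0)"
proof -
  have xz: "xi \<mu> \<in> zwords n r" and lx: "length (xi \<mu>) = r" using xi_Lambda[OF L] by auto
  show ?thesis
  proof (cases "u \<in> zwords n r")
    case False thus ?thesis using xz by (auto simp: tensor_op_def)
  next
    case True
    have lu: "length u = r" using True zwords_length by blast
    have "tensor_op n r (\<lambda>p. vunit) (xi \<mu>) u = (\<Prod>p<r. (if u ! p = xi \<mu> ! p then 1 else 0))"
      using xz True by (simp add: tensor_op_def vunit_ap)
    also have "\<dots> = (if \<forall>p<r. u ! p = xi \<mu> ! p then 1 else 0)" by (rule prod_ind)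
    also have "(\<forall>p<r. u ! p = xi \<mu> ! p) \<longleftrightarrow> u = xi \<mu>" using lu lx by (auto intro: nth_equalityI)
    finally show ?thesis .
  qed
qed

lemma eA_e:
  assumes i: "i \<in> {1..<n}" and L: "l \<in> Lambda n r" and li: "1 \<le> l ! i"
  shows "eA n r (Asc l (Suc i) i) = (\<lambda>w u. if cont n w = l then psi_e n r i w u else 0)"
proof -
  let ?A = "Asc l (Suc i) i"
  have bc: "Suc i \<noteq> i" and b: "Suc i \<in> {1..n}" and c: "i \<in> {1..n}" and lb: "1 \<le> l ! (Suc i - 1)"
    using i li by auto
  have co: "colsum n ?A = l" using colsum_Asc[OF L bc b c lb] .
  have ne: "Wds n r ?A \<noteq> {}" using Wds_Asc_ne[OF L bc b c lb] .
  then obtain u0 where u0: "u0 \<in> Wds n r ?A" by blast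
  have coL: "colsum n ?A \<in> Lambda n r" using co L by simp
  have ro: "rowsum n ?A \<in> Lambda n r" using rowsum_Lambda[OF coL u0] .
  have GTe: "(\<lambda>u. \<Sum>x\<in>dcoset n r ?A (dA n r ?A). hperm n r (zbvec (xi (rowsum n ?A))) x u) =
         (\<lambda>u. if u \<in> Wds n r ?A then 1 else 0)" using GT[OF ro coL ne] .
  let ?T = "\<lambda>w u. if cont n w = l then (\<Sum>j<r. tensor_op n r (fam vunit (matE i (Suc i)) (matK i) j) w u) else 0"
  have TT: "(\<lambda>w u. if cont n w = l then psi_e n r i w u else 0) = ?T" unfolding psi_e_fam ..
  have "schur_prop n r ?A ?T"
  proof (rule schur_prop_intro)
    show "supp n r ?T" by (rule tensor_supp)
    show "commC n r ?T" by (rule FAM[OF tw_id tw_K tw_E])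
    fix \<nu> assume N: "\<nu> \<in> Lambda n r"
    show "?T (xi \<nu>) = (if colsum n ?A = \<nu> then (\<lambda>u. \<Sum>x\<in>dcoset n r ?A (dA n r ?A). hperm n r (zbvec (xi (rowsum n ?A))) x u) else (\<lambda>_. 0))"
    proof (cases "\<nu> = l")
      case True
      have "?T (xi \<nu>) = (\<lambda>u. if u \<in> Wds n r ?A then 1 else 0)"
        using eval_e[OF L i] cont_xi[OF L] True unfolding Wds_Asc[OF L bc b c lb] psi_e_fam by (auto intro!: ext)
      thus ?thesis using GTe co True by simp
    next
      case False
      thus ?thesis using cont_xi[OF N] co by auto
    qed
  qed
  hence "eA n r ?A = ?T" by (rule eA_eq)
  thus ?thesis using TT by simp
qed

lemma eA_f:
  assumes i: "i \<in> {1..<n}" and L: "l \<in> Lambda n r" and li: "1 \<le> l ! (i - 1)"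
  shows "eA n r (Asc l i (Suc i)) = (\<lambda>w u. if cont n w = l then psi_f n r i w u else 0)"
proof -
  let ?A = "Asc l i (Suc i)"
  have bc: "i \<noteq> Suc i" and b: "i \<in> {1..n}" and c: "Suc i \<in> {1..n}" and lb: "1 \<le> l ! (i - 1)"
    using i li by auto
  have co: "colsum n ?A = l" using colsum_Asc[OF L bc b c lb] .
  have ne: "Wds n r ?A \<noteq> {}" using Wds_Asc_ne[OF L bc b c lb] .
  then obtain u0 where u0: "u0 \<in> Wds n r ?A" by blast
  have coL: "colsum n ?A \<in> Lambda n r" using co L by simp
  have ro: "rowsum n ?A \<in> Lambda n r" using rowsum_Lambda[OF coL u0] .
  have GTe: "(\<lambda>u. \<Sum>x\<in>dcoset n r ?A (dA n r ?A). hperm n r (zbvec (xi (rowsum n ?A))) x u) =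
         (\<lambda>u. if u \<in> Wds n r ?A then 1 else 0)" using GT[OF ro coL ne] .
  let ?T = "\<lambda>w u. if cont n w = l then (\<Sum>j<r. tensor_op n r (fam (matK (Suc i)) (matE (Suc i) i) vunit j) w u) else 0"
  have TT: "(\<lambda>w u. if cont n w = l then psi_f n r i w u else 0) = ?T" unfolding psi_f_fam ..
  have "schur_prop n r ?A ?T"
  proof (rule schur_prop_intro)
    show "supp n r ?T" by (rule tensor_supp)
    show "commC n r ?T" by (rule FAM[OF tw_K tw_id tw_F])
    fix \<nu> assume N: "\<nu> \<in> Lambda n r"
    show "?T (xi \<nu>) = (if colsum n ?A = \<nu> then (\<lambda>u. \<Sum>x\<in>dcoset n r ?A (dA n r ?A). hperm n r (zbvec (xi (rowsum n ?A))) x u) else (\<lambda>_. 0))"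
    proof (cases "\<nu> = l")
      case True
      have "?T (xi \<nu>) = (\<lambda>u. if u \<in> Wds n r ?A then 1 else 0)"
        using eval_f[OF L i] cont_xi[OF L] True unfolding Wds_Asc[OF L bc b c lb] psi_f_fam by (auto intro!: ext)
      thus ?thesis using GTe co True by simp
    next
      case False
      thus ?thesis using cont_xi[OF N] co by auto
    qed
  qed
  hence "eA n r ?A = ?T" by (rule eA_eq)
  thus ?thesis using TT by simp
qed

lemma eA_k:
  assumes L: "\<mu> \<in> Lambda n r"
  shows "eA n r (diagm \<mu>) = (\<lambda>w u. if cont n w = \<mu> then tensor_op n r (\<lambda>p. vunit) w u else 0)"
proof -
  let ?A = "diagm \<mu>"
  have co: "colsum n ?A = \<mu>" using colsum_diag[OF L] .
  have W: "Wds n r ?A = {xi \<mu>}" using Wds_diag[OF L] .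
  have ne: "Wds n r ?A \<noteq> {}" using W by simp
  have coL: "colsum n ?A \<in> Lambda n r" using co L by simp
  have ro: "rowsum n ?A \<in> Lambda n r" using rowsum_Lambda[OF coL, of "xi \<mu>"] W by simp
  have GTe: "(\<lambda>u. \<Sum>x\<in>dcoset n r ?A (dA n r ?A). hperm n r (zbvec (xi (rowsum n ?A))) x u) =
         (\<lambda>u. if u \<in> Wds n r ?A then 1 else 0)" using GT[OF ro coL ne] .
  let ?T = "\<lambda>w u. if cont n w = \<mu> then tensor_op n r (\<lambda>p. vunit) w u else 0"
  have "schur_prop n r ?A ?T"
  proof (rule schur_prop_intro)
    show "supp n r ?T" by (rule tensor_supp1)
    show "commC n r ?T" by (rule CONST[OF tw_id])
    fix \<nu> assume N: "\<nu> \<in> Lambda n r"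
    show "?T (xi \<nu>) = (if colsum n ?A = \<nu> then (\<lambda>u. \<Sum>x\<in>dcoset n r ?A (dA n r ?A). hperm n r (zbvec (xi (rowsum n ?A))) x u) else (\<lambda>_. 0))"
    proof (cases "\<nu> = \<mu>")
      case True
      have "?T (xi \<nu>) = (\<lambda>u. if u \<in> Wds n r ?A then 1 else 0)"
        using eval_id[OF L] cont_xi[OF L] True W by (auto intro!: ext)
      thus ?thesis using GTe co True by simp
    next
      case False
      thus ?thesis using cont_xi[OF N] co by auto
    qed
  qed
  thus ?thesis by (rule eA_eq)
qed


lemma tensor_zero: assumes "p < r" "ops p (w ! p) (u ! p) = 0" shows "tensor_op n r ops w u = 0"
proof -
  have "(\<Prod>p<r. ops p (w ! p) (u ! p)) = 0" using assms by (subst prod_zero_iff) auto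
  thus ?thesis by (simp add: tensor_op_def)
qed

lemma final_e:
  assumes i: "i \<in> {1..<n}"
  shows "psi_e n r i = schur_e n r i"
proof (intro ext)
  fix w u
  let ?S = "{l\<in>Lambda n r. 1 \<le> l ! i}"
  have Aeq: "(\<lambda>a b. diagm l a b - unitm (i + 1) (i + 1) a b + unitm i (i + 1) a b) = Asc l (Suc i) i" for l
    unfolding Asc_def Suc_eq_plus1 ..
  have fS: "finite ?S" using finite_Lambda by simp
  have "schur_e n r i w u = (\<Sum>l\<in>?S. eA n r (Asc l (Suc i) i) w u)"
    unfolding schur_e_def Aeq ..
  also have "\<dots> = (\<Sum>l\<in>?S. if cont n w = l then psi_e n r i w u else 0)"
    by (rule sum.cong[OF refl]) (use eA_e[OF i] in simp)
  also have "\<dots> = (if cont n w \<in> ?S then psi_e n r i w u else 0)"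
    using sum.delta'[OF fS, of "cont n w" "\<lambda>_. psi_e n r i w u"] by simp
  also have "\<dots> = psi_e n r i w u"
  proof (cases "cont n w \<in> ?S")
    case True thus ?thesis by simp
  next
    case False
    show ?thesis
    proof (cases "w \<in> zwords n r")
      case False2: False
      thus ?thesis by (simp add: psi_e_def tensor_op_def)
    next
      case True
      have "cont n w \<in> Lambda n r" using cont_Lambda[OF True] .
      hence "cont n w ! (Suc i - 1) = 0" using False by simp
      hence "count_list w (Suc i) = 0" using cont_nth[of "Suc i" n w] i by simp
      hence ni: "Suc i \<notin> set w" by (simp add: count_list_0_iff)
      have lw: "length w = r" using True zwords_length by blast
      have "psi_e n r i w u = 0"
        unfolding psi_e_fam
      proof (rule sum.neutral, intro ballI)
        fix j assume "j \<in> {..<r}"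
        hence j: "j < r" by simp
        have "w ! j \<noteq> Suc i" using ni j lw by (metis nth_mem)
        thus "tensor_op n r (fam vunit (matE i (Suc i)) (matK i) j) w u = 0"
          by (intro tensor_zero[OF j]) (simp add: fam_def matE_ap)
      qed
      thus ?thesis using False by simp
    qed
  qed
  finally show "psi_e n r i w u = schur_e n r i w u" by simp
qed

lemma final_f:
  assumes i: "i \<in> {1..<n}"
  shows "psi_f n r i = schur_f n r i"
proof (intro ext)
  fix w u
  let ?S = "{l\<in>Lambda n r. 1 \<le> l ! (i - 1)}"
  have Aeq: "(\<lambda>a b. diagm l a b - unitm i i a b + unitm (i + 1) i a b) = Asc l i (Suc i)" for l
    unfolding Asc_def Suc_eq_plus1 ..
  have fS: "finite ?S" using finite_Lambda by simp
  have "schur_f n r i w u = (\<Sum>l\<in>?S. eA n r (Asc l i (Suc i)) w u)"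
    unfolding schur_f_def Aeq ..
  also have "\<dots> = (\<Sum>l\<in>?S. if cont n w = l then psi_f n r i w u else 0)"
    by (rule sum.cong[OF refl]) (use eA_f[OF i] in simp)
  also have "\<dots> = (if cont n w \<in> ?S then psi_f n r i w u else 0)"
    using sum.delta'[OF fS, of "cont n w" "\<lambda>_. psi_f n r i w u"] by simp
  also have "\<dots> = psi_f n r i w u"
  proof (cases "cont n w \<in> ?S")
    case True thus ?thesis by simp
  next
    case False
    show ?thesis
    proof (cases "w \<in> zwords n r")
      case False2: False
      thus ?thesis by (simp add: psi_f_def tensor_op_def)
    next
      case True
      have "cont n w \<in> Lambda n r" using cont_Lambda[OF True] .
      hence "cont n w ! (i - 1) = 0" using False by simp
      hence "count_list w i = 0" using cont_nth[of i n w] i by simp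
      hence ni: "i \<notin> set w" by (simp add: count_list_0_iff)
      have lw: "length w = r" using True zwords_length by blast
      have "psi_f n r i w u = 0"
        unfolding psi_f_fam
      proof (rule sum.neutral, intro ballI)
        fix j assume "j \<in> {..<r}"
        hence j: "j < r" by simp
        have "w ! j \<noteq> i" using ni j lw by (metis nth_mem)
        thus "tensor_op n r (fam (matK (Suc i)) (matE (Suc i) i) vunit j) w u = 0"
          by (intro tensor_zero[OF j]) (simp add: fam_def matE_ap)
      qed
      thus ?thesis using False by simp
    qed
  qed
  finally show "psi_f n r i w u = schur_f n r i w u" by simp
qed

lemma final_k:
  assumes i: "i \<in> {1..n}"
  shows "psi_k n r i = (\<lambda>w u. \<Sum>\<mu>\<in>{\<mu>\<in>Lambda n r. \<mu> ! (i - 1) = 0}. k_mu n r \<mu> w u)"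
proof (intro ext)
  fix w u
  let ?S = "{\<mu>\<in>Lambda n r. \<mu> ! (i - 1) = 0}"
  have fS: "finite ?S" using finite_Lambda by simp
  have "(\<Sum>\<mu>\<in>?S. k_mu n r \<mu> w u) = (\<Sum>\<mu>\<in>?S. if cont n w = \<mu> then tensor_op n r (\<lambda>p. vunit) w u else 0)"
    by (rule sum.cong[OF refl]) (simp add: k_mu_def eA_k)
  also have "\<dots> = (if cont n w \<in> ?S then tensor_op n r (\<lambda>p. vunit) w u else 0)"
    using sum.delta'[OF fS, of "cont n w" "\<lambda>_. tensor_op n r (\<lambda>p. vunit) w u"] by simp
  also have "\<dots> = psi_k n r i w u"
  proof (cases "w \<in> zwords n r \<and> u \<in> zwords n r")
    case False thus ?thesis by (auto simp: psi_k_def tensor_op_def)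
  next
    case True
    hence w: "w \<in> zwords n r" and u: "u \<in> zwords n r" by auto
    have lw: "length w = r" using w zwords_length by blast
    have cL: "cont n w \<in> Lambda n r" using cont_Lambda[OF w] .
    have cS: "cont n w \<in> ?S \<longleftrightarrow> i \<notin> set w"
      using cL cont_nth[OF i, of w] by (simp add: count_list_0_iff)
    have sw: "i \<notin> set w \<longleftrightarrow> (\<forall>p<r. w ! p \<noteq> i)" using lw by (auto simp: in_set_conv_nth)
    have t1: "tensor_op n r (\<lambda>p. vunit) w u = (if \<forall>p<r. u ! p = w ! p then 1 else 0)"
      using w u prod_ind[of "\<lambda>p. u ! p = w ! p" r] by (simp add: tensor_op_def vunit_ap)
    have t2: "psi_k n r i w u = (if \<forall>p<r. w ! p \<noteq> i \<and> u ! p = w ! p then 1 else 0)"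
      using w u prod_ind[of "\<lambda>p. w ! p \<noteq> i \<and> u ! p = w ! p" r] by (simp add: psi_k_def tensor_op_def matK_ap)
    show ?thesis unfolding t1 t2 cS sw by auto
  qed
  finally show "psi_k n r i w u = (\<Sum>\<mu>\<in>?S. k_mu n r \<mu> w u)" by simp
qed

theorem mainTheorem9:
  fixes n r :: nat
  shows "(\<forall>i\<in>{1..<n}. psi_e n r i = schur_e n r i \<and> psi_f n r i = schur_f n r i) \<and>
         (\<forall>i\<in>{1..n}. psi_k n r i =
             (\<lambda>w u. \<Sum>\<mu>\<in>{\<mu>\<in>Lambda n r. \<mu> ! (i - 1) = 0}. k_mu n r \<mu> w u))"
  using final_e final_f final_k by blast


end
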